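(* The cut rule is admissible for system $\mathcal S$: every sequent derivable in $\mathcal S$ has a derivation in $\mathcal S$ without instances of the cut rule.
   Context: Fix countably infinite sets of names and variables and the constructors $\mathsf{pub}$ (unary) and $\mathsf{sign},\mathsf{blind},\langle\cdot,\cdot\rangle,\{\cdot\}_{\cdot}$ (binary). Let $E$ be the union of AC-convergent equational theories $E_1,\dots,E_n$ with pairwise disjoint signatures, all disjoint from the constructors, each containing at most one associative-commutative (AC) binary symbol $\oplus_i$; $E$ is presented by a rewrite system $R_E$ terminating and confluent modulo AC of the $\oplus_i$; $\Sigma_E$ is its signature. Terms: names, variables, $\mathsf{pub}(M)$, $\mathsf{sign}(M,N)$, $\mathsf{blind}(M,N)$, $\langle M,N\rangle$, $\{M\}_N$, $g(M_1,\dots,M_j)$ with $g\in\Sigma_E$; all terms ground. $\equiv$ is equality modulo AC; $\approx_E$ equality modulo $E$. A term is guarded if it is a name, a variable, or headed by a constructor. An $E$-context is a term with holes built only from function symbols of $\Sigma_E$. A sequent $\Gamma\vdash M$ is a finite set $\Gamma$ of terms and a term $M$, all in $R_E$-normal form modulo AC; $\Gamma,M$ means $\Gamma\cup\{M\}$. System $\mathcal S$: (id) $\Gamma\vdash M$ with no premise, if $M\approx_E C[M_1,\dots,M_k]$ for some $E$-context $C$ and $M_1,\dots,M_k\in\Gamma$; (cut) from $\Gamma\vdash M$ and $\Gamma,M\vdash T$ infer $\Gamma\vdash T$; ($p_L$) from $\Gamma,\langle M,N\rangle,M,N\vdash T$ infer $\Gamma,\langle M,N\rangle\vdash T$; ($p_R$)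 from $\Gamma\vdash M$, $\Gamma\vdash N$ infer $\Gamma\vdash\langle M,N\rangle$; ($e_L$) from $\Gamma,\{M\}_K\vdash K$ and $\Gamma,\{M\}_K,M,K\vdash N$ infer $\Gamma,\{M\}_K\vdash N$; ($e_R$) from $\Gamma\vdash M$, $\Gamma\vdash K$ infer $\Gamma\vdash\{M\}_K$; ($\mathsf{sign}_L$) from $\Gamma,\mathsf{sign}(M,K),\mathsf{pub}(L),M\vdash N$ infer $\Gamma,\mathsf{sign}(M,K),\mathsf{pub}(L)\vdash N$, provided $K\equiv L$; ($\mathsf{sign}_R$) from $\Gamma\vdash M$, $\Gamma\vdash K$ infer $\Gamma\vdash\mathsf{sign}(M,K)$; ($\mathsf{blind}_{L1}$) from $\Gamma,\mathsf{blind}(M,K)\vdash K$ and $\Gamma,\mathsf{blind}(M,K),M,K\vdash N$ infer $\Gamma,\mathsf{blind}(M,K)\vdash N$; ($\mathsf{blind}_R$) from $\Gamma\vdash M$, $\Gamma\vdash K$ infer $\Gamma\vdash\mathsf{blind}(M,K)$; ($\mathsf{blind}_{L2}$) from $\Gamma,\mathsf{sign}(\mathsf{blind}(M,R),K)\vdash R$ and $\Gamma,\mathsf{sign}(\mathsf{blind}(M,R),K),\mathsf{sign}(M,K),R\vdash N$ infer $\Gamma,\mathsf{sign}(\mathsf{blind}(M,R),K)\vdash N$; ($gs$) from $\Gamma\vdash A$ and $\Gamma,A\vdash M$ infer $\Gamma\vdash M$, provided $A$ is a guarded subterm of a term in $\Gamma\cup\{M\}$. *)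

theory Defs
  imports Main
begin

text \<open>Protocol variables are atoms (all terms are ground).\<close>

datatype 'f trm =
    Nm nat
  | Vr nat
  | Pub "'f trm"
  | Sign "'f trm" "'f trm"
  | Blind "'f trm" "'f trm"
  | Pair "'f trm" "'f trm"
  | Enc "'f trm" "'f trm"
  | Fn 'f "'f trm list"

text \<open>Patterns over Sigma_E with pattern variables PV i. They are used both for
the sides of the rewrite rules of R_E and for E-contexts (PV i are the holes).\<close>

datatype 'f pat = PV nat | PF 'f "'f pat list"

fun inst :: "'f pat \<Rightarrow> (nat \<Rightarrow> 'f trm) \<Rightarrow> 'f trm" where
  "inst (PV i) \<sigma> = \<sigma> i"
| "inst (PF g ps) \<sigma> = Fn g (map (\<lambda>p. inst p \<sigma>) ps)"

fun pvars :: "'f pat \<Rightarrow> nat set" where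
  "pvars (PV i) = {i}"
| "pvars (PF g ps) = \<Union> (set (map pvars ps))"

fun pat_wf :: "('f \<Rightarrow> nat) \<Rightarrow> 'f pat \<Rightarrow> bool" where
  "pat_wf ar (PV i) = True"
| "pat_wf ar (PF g ps) = (length ps = ar g \<and> (\<forall>p\<in>set ps. pat_wf ar p))"

fun pat_syms :: "'f pat \<Rightarrow> 'f set" where
  "pat_syms (PV i) = {}"
| "pat_syms (PF g ps) = insert g (\<Union> (set (map pat_syms ps)))"

fun trm_wf :: "('f \<Rightarrow> nat) \<Rightarrow> 'f trm \<Rightarrow> bool" where
  "trm_wf ar (Nm n) = True"
| "trm_wf ar (Vr n) = True"
| "trm_wf ar (Pub M) = trm_wf ar M"
| "trm_wf ar (Sign M N) = (trm_wf ar M \<and> trm_wf ar N)"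
| "trm_wf ar (Blind M N) = (trm_wf ar M \<and> trm_wf ar N)"
| "trm_wf ar (Pair M N) = (trm_wf ar M \<and> trm_wf ar N)"
| "trm_wf ar (Enc M N) = (trm_wf ar M \<and> trm_wf ar N)"
| "trm_wf ar (Fn g Ms) = (length Ms = ar g \<and> (\<forall>M\<in>set Ms. trm_wf ar M))"

inductive aceq :: "'f set \<Rightarrow> 'f trm \<Rightarrow> 'f trm \<Rightarrow> bool" for acs where
  ac_refl: "aceq acs s s"
| ac_sym: "aceq acs s t \<Longrightarrow> aceq acs t s"
| ac_trans: "aceq acs s t \<Longrightarrow> aceq acs t u \<Longrightarrow> aceq acs s u"
| ac_comm: "f \<in> acs \<Longrightarrow> aceq acs (Fn f [a, b]) (Fn f [b, a])"
| ac_assoc: "f \<in> acs \<Longrightarrow> aceq acs (Fn f [Fn f [a, b], c]) (Fn f [a, Fn f [b, c]])"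
| ac_pub: "aceq acs s t \<Longrightarrow> aceq acs (Pub s) (Pub t)"
| ac_sign: "aceq acs s t \<Longrightarrow> aceq acs u v \<Longrightarrow> aceq acs (Sign s u) (Sign t v)"
| ac_blind: "aceq acs s t \<Longrightarrow> aceq acs u v \<Longrightarrow> aceq acs (Blind s u) (Blind t v)"
| ac_pair: "aceq acs s t \<Longrightarrow> aceq acs u v \<Longrightarrow> aceq acs (Pair s u) (Pair t v)"
| ac_enc: "aceq acs s t \<Longrightarrow> aceq acs u v \<Longrightarrow> aceq acs (Enc s u) (Enc t v)"
| ac_fn: "aceq acs s t \<Longrightarrow> aceq acs (Fn g (xs @ s # ys)) (Fn g (xs @ t # ys))"

inductive rstep :: "('f pat \<times> 'f pat) set \<Rightarrow> 'f trm \<Rightarrow> 'f trm \<Rightarrow> bool" for R where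
  rs_root: "(l, r) \<in> R \<Longrightarrow> rstep R (inst l \<sigma>) (inst r \<sigma>)"
| rs_pub: "rstep R s t \<Longrightarrow> rstep R (Pub s) (Pub t)"
| rs_sign1: "rstep R s t \<Longrightarrow> rstep R (Sign s u) (Sign t u)"
| rs_sign2: "rstep R s t \<Longrightarrow> rstep R (Sign u s) (Sign u t)"
| rs_blind1: "rstep R s t \<Longrightarrow> rstep R (Blind s u) (Blind t u)"
| rs_blind2: "rstep R s t \<Longrightarrow> rstep R (Blind u s) (Blind u t)"
| rs_pair1: "rstep R s t \<Longrightarrow> rstep R (Pair s u) (Pair t u)"
| rs_pair2: "rstep R s t \<Longrightarrow> rstep R (Pair u s) (Pair u t)"
| rs_enc1: "rstep R s t \<Longrightarrow> rstep R (Enc s u) (Enc t u)"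
| rs_enc2: "rstep R s t \<Longrightarrow> rstep R (Enc u s) (Enc u t)"
| rs_fn: "rstep R s t \<Longrightarrow> rstep R (Fn g (xs @ s # ys)) (Fn g (xs @ t # ys))"

definition rstep_ac :: "'f set \<Rightarrow> ('f pat \<times> 'f pat) set \<Rightarrow> 'f trm \<Rightarrow> 'f trm \<Rightarrow> bool" where
  "rstep_ac acs R s t \<longleftrightarrow> (\<exists>s' t'. aceq acs s s' \<and> rstep R s' t' \<and> aceq acs t' t)"

definition terminating_mod_ac :: "'f set \<Rightarrow> ('f pat \<times> 'f pat) set \<Rightarrow> bool" where
  "terminating_mod_ac acs R \<longleftrightarrow> wfP (\<lambda>t s. rstep_ac acs R s t)"

definition conv :: "'f set \<Rightarrow> ('f pat \<times> 'f pat) set \<Rightarrow> 'f trm \<Rightarrow> 'f trm \<Rightarrow> bool" where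
  "conv acs R = (\<lambda>s t. rstep R s t \<or> rstep R t s \<or> aceq acs s t)\<^sup>*\<^sup>*"

definition confluent_mod_ac :: "'f set \<Rightarrow> ('f pat \<times> 'f pat) set \<Rightarrow> bool" where
  "confluent_mod_ac acs R \<longleftrightarrow>
     (\<forall>s t. conv acs R s t \<longrightarrow>
        (\<exists>s' t'. (rstep_ac acs R)\<^sup>*\<^sup>* s s' \<and> (rstep_ac acs R)\<^sup>*\<^sup>* t t' \<and> aceq acs s' t'))"

definition normal_mod_ac :: "'f set \<Rightarrow> ('f pat \<times> 'f pat) set \<Rightarrow> 'f trm \<Rightarrow> bool" where
  "normal_mod_ac acs R s \<longleftrightarrow> \<not> (\<exists>t. rstep_ac acs R s t)"

text \<open>th assigns each symbol of Sigma_E to one of the theories E_1..E_n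
(indices 0..n-1); ar is the arity; acs is the set of AC symbols; R is R_E.\<close>

definition rules_of :: "('f \<Rightarrow> nat) \<Rightarrow> nat \<Rightarrow> ('f pat \<times> 'f pat) set \<Rightarrow> ('f pat \<times> 'f pat) set" where
  "rules_of th i R = {(l, r) \<in> R. pat_syms l \<union> pat_syms r \<subseteq> {g. th g = i}}"

definition E_setting ::
  "('f \<Rightarrow> nat) \<Rightarrow> ('f \<Rightarrow> nat) \<Rightarrow> 'f set \<Rightarrow> ('f pat \<times> 'f pat) set \<Rightarrow> bool" where
  "E_setting ar th acs R \<longleftrightarrow>
     (\<exists>n. \<forall>g. th g < n)
   \<and> (\<forall>f\<in>acs. ar f = 2)
   \<and> (\<forall>f\<in>acs. \<forall>g\<in>acs. th f = th g \<longrightarrow> f = g)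
   \<and> (\<forall>(l, r)\<in>R. pat_wf ar l \<and> pat_wf ar r \<and> pvars r \<subseteq> pvars l \<and> (\<forall>i. l \<noteq> PV i))
   \<and> (\<forall>(l, r)\<in>R. \<exists>i. (l, r) \<in> rules_of th i R)
   \<and> (\<forall>i. terminating_mod_ac acs (rules_of th i R) \<and> confluent_mod_ac acs (rules_of th i R))
   \<and> terminating_mod_ac acs R \<and> confluent_mod_ac acs R"

definition is_seq :: "('f \<Rightarrow> nat) \<Rightarrow> 'f set \<Rightarrow> ('f pat \<times> 'f pat) set \<Rightarrow> 'f trm set \<Rightarrow> 'f trm \<Rightarrow> bool" where
  "is_seq ar acs R \<Gamma> M \<longleftrightarrow> finite \<Gamma> \<and>
     (\<forall>N\<in>insert M \<Gamma>. trm_wf ar N \<and> normal_mod_ac acs R N)"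

text \<open>E-contexts are well-formed patterns over Sigma_E; the holes PV i are filled
by the terms \<sigma> i, all taken from \<Gamma>.\<close>

definition id_ok :: "('f \<Rightarrow> nat) \<Rightarrow> 'f set \<Rightarrow> ('f pat \<times> 'f pat) set \<Rightarrow> 'f trm set \<Rightarrow> 'f trm \<Rightarrow> bool" where
  "id_ok ar acs R \<Gamma> M \<longleftrightarrow>
     (\<exists>C \<sigma>. pat_wf ar C \<and> (\<forall>i\<in>pvars C. \<sigma> i \<in> \<Gamma>) \<and> conv acs R M (inst C \<sigma>))"

fun guarded :: "'f trm \<Rightarrow> bool" where
  "guarded (Fn g Ms) = False"
| "guarded _ = True"

inductive subterm :: "'f trm \<Rightarrow> 'f trm \<Rightarrow> bool" where
  st_refl: "subterm s s"
| st_pub: "subterm s M \<Longrightarrow> subterm s (Pub M)"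
| st_sign1: "subterm s M \<Longrightarrow> subterm s (Sign M N)"
| st_sign2: "subterm s N \<Longrightarrow> subterm s (Sign M N)"
| st_blind1: "subterm s M \<Longrightarrow> subterm s (Blind M N)"
| st_blind2: "subterm s N \<Longrightarrow> subterm s (Blind M N)"
| st_pair1: "subterm s M \<Longrightarrow> subterm s (Pair M N)"
| st_pair2: "subterm s N \<Longrightarrow> subterm s (Pair M N)"
| st_enc1: "subterm s M \<Longrightarrow> subterm s (Enc M N)"
| st_enc2: "subterm s N \<Longrightarrow> subterm s (Enc M N)"
| st_fn: "M \<in> set Ms \<Longrightarrow> subterm s M \<Longrightarrow> subterm s (Fn g Ms)"

text \<open>derS ar acs R c \<Gamma> M: the sequent \<Gamma> |- M is derivable in S; the flag c says
whether the cut rule may be used.\<close>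

inductive derS :: "('f \<Rightarrow> nat) \<Rightarrow> 'f set \<Rightarrow> ('f pat \<times> 'f pat) set \<Rightarrow> bool \<Rightarrow> 'f trm set \<Rightarrow> 'f trm \<Rightarrow> bool"
  for ar acs R where
  r_id: "is_seq ar acs R \<Gamma> M \<Longrightarrow> id_ok ar acs R \<Gamma> M \<Longrightarrow> derS ar acs R c \<Gamma> M"
| r_cut: "is_seq ar acs R \<Gamma> T \<Longrightarrow> derS ar acs R True \<Gamma> M \<Longrightarrow> derS ar acs R True (insert M \<Gamma>) T
          \<Longrightarrow> derS ar acs R True \<Gamma> T"
| r_pL: "is_seq ar acs R (insert (Pair M N) \<Gamma>) T
         \<Longrightarrow> derS ar acs R c (\<Gamma> \<union> {Pair M N, M, N}) T
         \<Longrightarrow> derS ar acs R c (insert (Pair M N) \<Gamma>) T"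
| r_pR: "is_seq ar acs R \<Gamma> (Pair M N) \<Longrightarrow> derS ar acs R c \<Gamma> M \<Longrightarrow> derS ar acs R c \<Gamma> N
         \<Longrightarrow> derS ar acs R c \<Gamma> (Pair M N)"
| r_eL: "is_seq ar acs R (insert (Enc M K) \<Gamma>) N
         \<Longrightarrow> derS ar acs R c (insert (Enc M K) \<Gamma>) K
         \<Longrightarrow> derS ar acs R c (\<Gamma> \<union> {Enc M K, M, K}) N
         \<Longrightarrow> derS ar acs R c (insert (Enc M K) \<Gamma>) N"
| r_eR: "is_seq ar acs R \<Gamma> (Enc M K) \<Longrightarrow> derS ar acs R c \<Gamma> M \<Longrightarrow> derS ar acs R c \<Gamma> K
         \<Longrightarrow> derS ar acs R c \<Gamma> (Enc M K)"
| r_signL: "aceq acs K L \<Longrightarrow> is_seq ar acs R (\<Gamma> \<union> {Sign M K, Pub L}) N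
         \<Longrightarrow> derS ar acs R c (\<Gamma> \<union> {Sign M K, Pub L, M}) N
         \<Longrightarrow> derS ar acs R c (\<Gamma> \<union> {Sign M K, Pub L}) N"
| r_signR: "is_seq ar acs R \<Gamma> (Sign M K) \<Longrightarrow> derS ar acs R c \<Gamma> M \<Longrightarrow> derS ar acs R c \<Gamma> K
         \<Longrightarrow> derS ar acs R c \<Gamma> (Sign M K)"
| r_blindL1: "is_seq ar acs R (insert (Blind M K) \<Gamma>) N
         \<Longrightarrow> derS ar acs R c (insert (Blind M K) \<Gamma>) K
         \<Longrightarrow> derS ar acs R c (\<Gamma> \<union> {Blind M K, M, K}) N
         \<Longrightarrow> derS ar acs R c (insert (Blind M K) \<Gamma>) N"
| r_blindR: "is_seq ar acs R \<Gamma> (Blind M K) \<Longrightarrow> derS ar acs R c \<Gamma> M \<Longrightarrow> derS ar acs R c \<Gamma> K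
         \<Longrightarrow> derS ar acs R c \<Gamma> (Blind M K)"
| r_blindL2: "is_seq ar acs R (insert (Sign (Blind M Rr) K) \<Gamma>) N
         \<Longrightarrow> derS ar acs R c (insert (Sign (Blind M Rr) K) \<Gamma>) Rr
         \<Longrightarrow> derS ar acs R c (\<Gamma> \<union> {Sign (Blind M Rr) K, Sign M K, Rr}) N
         \<Longrightarrow> derS ar acs R c (insert (Sign (Blind M Rr) K) \<Gamma>) N"
| r_gs: "is_seq ar acs R \<Gamma> M \<Longrightarrow> guarded A \<Longrightarrow> (\<exists>B\<in>insert M \<Gamma>. subterm A B)
         \<Longrightarrow> derS ar acs R c \<Gamma> A \<Longrightarrow> derS ar acs R c (insert A \<Gamma>) M
         \<Longrightarrow> derS ar acs R c \<Gamma> M"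

end

theory Submission
  imports Defs
begin


lemma subterm_trans: "subterm b c \<Longrightarrow> subterm a b \<Longrightarrow> subterm a c"
  by (induction b c rule: subterm.induct) (auto intro: subterm.intros)

lemma subterm_Fn_inv: "subterm u (Fn g Ms) \<Longrightarrow> u = Fn g Ms \<or> (\<exists>M\<in>set Ms. subterm u M)"
  by (cases rule: subterm.cases) auto

lemma aceq_guarded: "aceq acs s t \<Longrightarrow> guarded s = guarded t"
  by (induction rule: aceq.induct) auto

lemma aceq_Pub: "aceq acs s t \<Longrightarrow> (\<forall>a. s = Pub a \<longrightarrow> (\<exists>a'. t = Pub a' \<and> aceq acs a a'))
   \<and> (\<forall>a. t = Pub a \<longrightarrow> (\<exists>a'. s = Pub a' \<and> aceq acs a' a))"
proof (induction rule: aceq.induct)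
  case (ac_refl s) show ?case by (simp add: aceq.ac_refl)
next
  case (ac_sym s t)
  show ?case
  proof (intro conjI allI impI)
    fix a assume "t = Pub a"
    then obtain a' where "s = Pub a'" "aceq acs a' a" using ac_sym.IH by blast
    then show "\<exists>a'. s = Pub a' \<and> aceq acs a a'" using aceq.ac_sym by blast
  next
    fix a assume "s = Pub a"
    then obtain a' where "t = Pub a'" "aceq acs a a'" using ac_sym.IH by blast
    then show "\<exists>a'. t = Pub a' \<and> aceq acs a' a" using aceq.ac_sym by blast
  qed
next
  case (ac_trans s t u)
  show ?case
  proof (intro conjI allI impI)
    fix a assume "s = Pub a"
    then obtain a' where 1: "t = Pub a'" "aceq acs a a'" using ac_trans.IH(1) by blast
    then obtain a'' where 2: "u = Pub a''" "aceq acs a' a''" using ac_trans.IH(2) by blast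
    show "\<exists>a'. u = Pub a' \<and> aceq acs a a'" using 1 2 aceq.ac_trans[of acs a a' a''] by blast
  next
    fix a assume "u = Pub a"
    then obtain a' where 1: "t = Pub a'" "aceq acs a' a" using ac_trans.IH(2) by blast
    then obtain a'' where 2: "s = Pub a''" "aceq acs a'' a'" using ac_trans.IH(1) by blast
    show "\<exists>a'. s = Pub a' \<and> aceq acs a' a" using 1 2 aceq.ac_trans[of acs a'' a' a] by blast
  qed
qed simp_all
lemma aceq_Sign: "aceq acs s t \<Longrightarrow> (\<forall>a b. s = Sign a b \<longrightarrow> (\<exists>a' b'. t = Sign a' b' \<and> aceq acs a a' \<and> aceq acs b b'))
   \<and> (\<forall>a b. t = Sign a b \<longrightarrow> (\<exists>a' b'. s = Sign a' b' \<and> aceq acs a' a \<and> aceq acs b' b))"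
proof (induction rule: aceq.induct)
  case (ac_refl s) show ?case by (simp add: aceq.ac_refl)
next
  case (ac_sym s t)
  show ?case
  proof (intro conjI allI impI)
    fix a b assume "t = Sign a b"
    then obtain a' b' where "s = Sign a' b'" "aceq acs a' a" "aceq acs b' b" using ac_sym.IH by blast
    then show "\<exists>a' b'. s = Sign a' b' \<and> aceq acs a a' \<and> aceq acs b b'" using aceq.ac_sym by blast
  next
    fix a b assume "s = Sign a b"
    then obtain a' b' where "t = Sign a' b'" "aceq acs a a'" "aceq acs b b'" using ac_sym.IH by blast
    then show "\<exists>a' b'. t = Sign a' b' \<and> aceq acs a' a \<and> aceq acs b' b" using aceq.ac_sym by blast
  qed
next
  case (ac_trans s t u)
  show ?case
  proof (intro conjI allI impI)
    fix a b assume "s = Sign a b"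
    then obtain a' b' where 1: "t = Sign a' b'" "aceq acs a a'" "aceq acs b b'" using ac_trans.IH(1) by blast
    then obtain a'' b'' where 2: "u = Sign a'' b''" "aceq acs a' a''" "aceq acs b' b''" using ac_trans.IH(2) by blast
    show "\<exists>a' b'. u = Sign a' b' \<and> aceq acs a a' \<and> aceq acs b b'"
      using 1 2 aceq.ac_trans[of acs a a' a''] aceq.ac_trans[of acs b b' b''] by blast
  next
    fix a b assume "u = Sign a b"
    then obtain a' b' where 1: "t = Sign a' b'" "aceq acs a' a" "aceq acs b' b" using ac_trans.IH(2) by blast
    then obtain a'' b'' where 2: "s = Sign a'' b''" "aceq acs a'' a'" "aceq acs b'' b'" using ac_trans.IH(1) by blast
    show "\<exists>a' b'. s = Sign a' b' \<and> aceq acs a' a \<and> aceq acs b' b"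
      using 1 2 aceq.ac_trans[of acs a'' a' a] aceq.ac_trans[of acs b'' b' b] by blast
  qed
qed simp_all
lemma aceq_Blind: "aceq acs s t \<Longrightarrow> (\<forall>a b. s = Blind a b \<longrightarrow> (\<exists>a' b'. t = Blind a' b' \<and> aceq acs a a' \<and> aceq acs b b'))
   \<and> (\<forall>a b. t = Blind a b \<longrightarrow> (\<exists>a' b'. s = Blind a' b' \<and> aceq acs a' a \<and> aceq acs b' b))"
proof (induction rule: aceq.induct)
  case (ac_refl s) show ?case by (simp add: aceq.ac_refl)
next
  case (ac_sym s t)
  show ?case
  proof (intro conjI allI impI)
    fix a b assume "t = Blind a b"
    then obtain a' b' where "s = Blind a' b'" "aceq acs a' a" "aceq acs b' b" using ac_sym.IH by blast
    then show "\<exists>a' b'. s = Blind a' b' \<and> aceq acs a a' \<and> aceq acs b b'" using aceq.ac_sym by blast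
  next
    fix a b assume "s = Blind a b"
    then obtain a' b' where "t = Blind a' b'" "aceq acs a a'" "aceq acs b b'" using ac_sym.IH by blast
    then show "\<exists>a' b'. t = Blind a' b' \<and> aceq acs a' a \<and> aceq acs b' b" using aceq.ac_sym by blast
  qed
next
  case (ac_trans s t u)
  show ?case
  proof (intro conjI allI impI)
    fix a b assume "s = Blind a b"
    then obtain a' b' where 1: "t = Blind a' b'" "aceq acs a a'" "aceq acs b b'" using ac_trans.IH(1) by blast
    then obtain a'' b'' where 2: "u = Blind a'' b''" "aceq acs a' a''" "aceq acs b' b''" using ac_trans.IH(2) by blast
    show "\<exists>a' b'. u = Blind a' b' \<and> aceq acs a a' \<and> aceq acs b b'"
      using 1 2 aceq.ac_trans[of acs a a' a''] aceq.ac_trans[of acs b b' b''] by blast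
  next
    fix a b assume "u = Blind a b"
    then obtain a' b' where 1: "t = Blind a' b'" "aceq acs a' a" "aceq acs b' b" using ac_trans.IH(2) by blast
    then obtain a'' b'' where 2: "s = Blind a'' b''" "aceq acs a'' a'" "aceq acs b'' b'" using ac_trans.IH(1) by blast
    show "\<exists>a' b'. s = Blind a' b' \<and> aceq acs a' a \<and> aceq acs b' b"
      using 1 2 aceq.ac_trans[of acs a'' a' a] aceq.ac_trans[of acs b'' b' b] by blast
  qed
qed simp_all
lemma aceq_Pair: "aceq acs s t \<Longrightarrow> (\<forall>a b. s = Pair a b \<longrightarrow> (\<exists>a' b'. t = Pair a' b' \<and> aceq acs a a' \<and> aceq acs b b'))
   \<and> (\<forall>a b. t = Pair a b \<longrightarrow> (\<exists>a' b'. s = Pair a' b' \<and> aceq acs a' a \<and> aceq acs b' b))"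
proof (induction rule: aceq.induct)
  case (ac_refl s) show ?case by (simp add: aceq.ac_refl)
next
  case (ac_sym s t)
  show ?case
  proof (intro conjI allI impI)
    fix a b assume "t = Pair a b"
    then obtain a' b' where "s = Pair a' b'" "aceq acs a' a" "aceq acs b' b" using ac_sym.IH by blast
    then show "\<exists>a' b'. s = Pair a' b' \<and> aceq acs a a' \<and> aceq acs b b'" using aceq.ac_sym by blast
  next
    fix a b assume "s = Pair a b"
    then obtain a' b' where "t = Pair a' b'" "aceq acs a a'" "aceq acs b b'" using ac_sym.IH by blast
    then show "\<exists>a' b'. t = Pair a' b' \<and> aceq acs a' a \<and> aceq acs b' b" using aceq.ac_sym by blast
  qed
next
  case (ac_trans s t u)
  show ?case
  proof (intro conjI allI impI)
    fix a b assume "s = Pair a b"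
    then obtain a' b' where 1: "t = Pair a' b'" "aceq acs a a'" "aceq acs b b'" using ac_trans.IH(1) by blast
    then obtain a'' b'' where 2: "u = Pair a'' b''" "aceq acs a' a''" "aceq acs b' b''" using ac_trans.IH(2) by blast
    show "\<exists>a' b'. u = Pair a' b' \<and> aceq acs a a' \<and> aceq acs b b'"
      using 1 2 aceq.ac_trans[of acs a a' a''] aceq.ac_trans[of acs b b' b''] by blast
  next
    fix a b assume "u = Pair a b"
    then obtain a' b' where 1: "t = Pair a' b'" "aceq acs a' a" "aceq acs b' b" using ac_trans.IH(2) by blast
    then obtain a'' b'' where 2: "s = Pair a'' b''" "aceq acs a'' a'" "aceq acs b'' b'" using ac_trans.IH(1) by blast
    show "\<exists>a' b'. s = Pair a' b' \<and> aceq acs a' a \<and> aceq acs b' b"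
      using 1 2 aceq.ac_trans[of acs a'' a' a] aceq.ac_trans[of acs b'' b' b] by blast
  qed
qed simp_all
lemma aceq_Enc: "aceq acs s t \<Longrightarrow> (\<forall>a b. s = Enc a b \<longrightarrow> (\<exists>a' b'. t = Enc a' b' \<and> aceq acs a a' \<and> aceq acs b b'))
   \<and> (\<forall>a b. t = Enc a b \<longrightarrow> (\<exists>a' b'. s = Enc a' b' \<and> aceq acs a' a \<and> aceq acs b' b))"
proof (induction rule: aceq.induct)
  case (ac_refl s) show ?case by (simp add: aceq.ac_refl)
next
  case (ac_sym s t)
  show ?case
  proof (intro conjI allI impI)
    fix a b assume "t = Enc a b"
    then obtain a' b' where "s = Enc a' b'" "aceq acs a' a" "aceq acs b' b" using ac_sym.IH by blast
    then show "\<exists>a' b'. s = Enc a' b' \<and> aceq acs a a' \<and> aceq acs b b'" using aceq.ac_sym by blast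
  next
    fix a b assume "s = Enc a b"
    then obtain a' b' where "t = Enc a' b'" "aceq acs a a'" "aceq acs b b'" using ac_sym.IH by blast
    then show "\<exists>a' b'. t = Enc a' b' \<and> aceq acs a' a \<and> aceq acs b' b" using aceq.ac_sym by blast
  qed
next
  case (ac_trans s t u)
  show ?case
  proof (intro conjI allI impI)
    fix a b assume "s = Enc a b"
    then obtain a' b' where 1: "t = Enc a' b'" "aceq acs a a'" "aceq acs b b'" using ac_trans.IH(1) by blast
    then obtain a'' b'' where 2: "u = Enc a'' b''" "aceq acs a' a''" "aceq acs b' b''" using ac_trans.IH(2) by blast
    show "\<exists>a' b'. u = Enc a' b' \<and> aceq acs a a' \<and> aceq acs b b'"
      using 1 2 aceq.ac_trans[of acs a a' a''] aceq.ac_trans[of acs b b' b''] by blast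
  next
    fix a b assume "u = Enc a b"
    then obtain a' b' where 1: "t = Enc a' b'" "aceq acs a' a" "aceq acs b' b" using ac_trans.IH(2) by blast
    then obtain a'' b'' where 2: "s = Enc a'' b''" "aceq acs a'' a'" "aceq acs b'' b'" using ac_trans.IH(1) by blast
    show "\<exists>a' b'. s = Enc a' b' \<and> aceq acs a' a \<and> aceq acs b' b"
      using 1 2 aceq.ac_trans[of acs a'' a' a] aceq.ac_trans[of acs b'' b' b] by blast
  qed
qed simp_all

lemma aceq_PubD: "aceq acs (Pub a) t \<Longrightarrow> \<exists>a'. t = Pub a' \<and> aceq acs a a'"
  using aceq_Pub by blast
lemma aceq_SignD: "aceq acs (Sign a b) t \<Longrightarrow> \<exists>a' b'. t = Sign a' b' \<and> aceq acs a a' \<and> aceq acs b b'"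
  using aceq_Sign by blast
lemma aceq_BlindD: "aceq acs (Blind a b) t \<Longrightarrow> \<exists>a' b'. t = Blind a' b' \<and> aceq acs a a' \<and> aceq acs b b'"
  using aceq_Blind by blast
lemma aceq_PairD: "aceq acs (Pair a b) t \<Longrightarrow> \<exists>a' b'. t = Pair a' b' \<and> aceq acs a a' \<and> aceq acs b b'"
  using aceq_Pair by blast
lemma aceq_EncD: "aceq acs (Enc a b) t \<Longrightarrow> \<exists>a' b'. t = Enc a' b' \<and> aceq acs a a' \<and> aceq acs b b'"
  using aceq_Enc by blast

lemma normal_aceq: "normal_mod_ac acs R s \<Longrightarrow> aceq acs s t \<Longrightarrow> normal_mod_ac acs R t"
  unfolding normal_mod_ac_def rstep_ac_def by (meson aceq.ac_trans)

lemma normal_ctx: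
  assumes A: "\<And>a b. aceq acs a b \<Longrightarrow> aceq acs (F a) (F b)"
    and B: "\<And>a b. rstep R a b \<Longrightarrow> rstep R (F a) (F b)"
    and N: "normal_mod_ac acs R (F M)"
  shows "normal_mod_ac acs R M"
  unfolding normal_mod_ac_def rstep_ac_def
proof
  assume "\<exists>t s' t'. aceq acs M s' \<and> rstep R s' t' \<and> aceq acs t' t"
  then obtain t s' t' where "aceq acs M s'" "rstep R s' t'" "aceq acs t' t" by blast
  then have "aceq acs (F M) (F s')" "rstep R (F s') (F t')" using A B by auto
  then show False using N unfolding normal_mod_ac_def rstep_ac_def by (meson aceq.ac_refl)
qed

lemma normal_sub: "subterm u s \<Longrightarrow> normal_mod_ac acs R s \<Longrightarrow> normal_mod_ac acs R u"
proof (induction rule: subterm.induct)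
  case (st_fn M Ms s g)
  from st_fn(1) obtain xs ys where Ms: "Ms = xs @ M # ys" by (meson split_list)
  have "normal_mod_ac acs R M"
    by (rule normal_ctx[where F="\<lambda>x. Fn g (xs @ x # ys)"]) (use st_fn Ms in \<open>auto intro: ac_fn rs_fn\<close>)
  then show ?case using st_fn by blast
next
  case (st_pub s M) then show ?case using normal_ctx[where F=Pub] by (metis ac_pub rs_pub)
next
  case (st_sign1 s M N) then show ?case using normal_ctx[where F="\<lambda>x. Sign x N"] by (metis ac_sign ac_refl rs_sign1)
next
  case (st_sign2 s N M) then show ?case using normal_ctx[where F="\<lambda>x. Sign M x"] by (metis ac_sign ac_refl rs_sign2)
next
  case (st_blind1 s M N) then show ?case using normal_ctx[where F="\<lambda>x. Blind x N"] by (metis ac_blind ac_refl rs_blind1)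
next
  case (st_blind2 s N M) then show ?case using normal_ctx[where F="\<lambda>x. Blind M x"] by (metis ac_blind ac_refl rs_blind2)
next
  case (st_pair1 s M N) then show ?case using normal_ctx[where F="\<lambda>x. Pair x N"] by (metis ac_pair ac_refl rs_pair1)
next
  case (st_pair2 s N M) then show ?case using normal_ctx[where F="\<lambda>x. Pair M x"] by (metis ac_pair ac_refl rs_pair2)
next
  case (st_enc1 s M N) then show ?case using normal_ctx[where F="\<lambda>x. Enc x N"] by (metis ac_enc ac_refl rs_enc1)
next
  case (st_enc2 s N M) then show ?case using normal_ctx[where F="\<lambda>x. Enc M x"] by (metis ac_enc ac_refl rs_enc2)
qed simp

lemma wf_sub: "subterm u s \<Longrightarrow> trm_wf ar s \<Longrightarrow> trm_wf ar u"
  by (induction rule: subterm.induct) auto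


lemma subterm_Pub_inv: "subterm u (Pub a) \<Longrightarrow> u = Pub a \<or> subterm u a"
  by (cases rule: subterm.cases) auto
lemma subterm_Sign_inv: "subterm u (Sign a b) \<Longrightarrow> u = Sign a b \<or> subterm u a \<or> subterm u b"
  by (cases rule: subterm.cases) auto
lemma subterm_Blind_inv: "subterm u (Blind a b) \<Longrightarrow> u = Blind a b \<or> subterm u a \<or> subterm u b"
  by (cases rule: subterm.cases) auto
lemma subterm_Pair_inv: "subterm u (Pair a b) \<Longrightarrow> u = Pair a b \<or> subterm u a \<or> subterm u b"
  by (cases rule: subterm.cases) auto
lemma subterm_Enc_inv: "subterm u (Enc a b) \<Longrightarrow> u = Enc a b \<or> subterm u a \<or> subterm u b"
  by (cases rule: subterm.cases) auto
lemma subterm_atom_inv: "subterm u (Nm n) \<Longrightarrow> u = Nm n" "subterm u (Vr n) \<Longrightarrow> u = Vr n"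
  by (erule subterm.cases; auto)+

lemma subterm_Fn_guarded: "subterm u (Fn g Ms) \<Longrightarrow> guarded u \<Longrightarrow> \<exists>M\<in>set Ms. subterm u M"
  using subterm_Fn_inv by fastforce

lemma subterm_Fn2: "subterm u (Fn f [x, y]) \<Longrightarrow> guarded u \<Longrightarrow> subterm u x \<or> subterm u y"
  using subterm_Fn_guarded[of u f "[x, y]"] by simp

lemma sFn2: "subterm u x \<Longrightarrow> subterm u (Fn f [x, y])" "subterm u y \<Longrightarrow> subterm u (Fn f [x, y])"
  by (auto intro: st_fn[of x] st_fn[of y])

lemma acsub: "aceq acs s t \<Longrightarrow>
   (\<forall>u. subterm u t \<longrightarrow> guarded u \<longrightarrow> (\<exists>u'. subterm u' s \<and> aceq acs u' u)) \<and>
   (\<forall>u. subterm u s \<longrightarrow> guarded u \<longrightarrow> (\<exists>u'. subterm u' t \<and> aceq acs u u'))"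
proof (induction rule: aceq.induct)
  case (ac_refl s) then show ?case using aceq.ac_refl by blast
next
  case (ac_sym s t)
  show ?case
  proof (intro conjI allI impI)
    fix u assume "subterm u s" "guarded u"
    then obtain u' where "subterm u' t" "aceq acs u u'" using ac_sym.IH by blast
    then show "\<exists>u'. subterm u' t \<and> aceq acs u' u" using aceq.ac_sym by blast
  next
    fix u assume "subterm u t" "guarded u"
    then obtain u' where "subterm u' s" "aceq acs u' u" using ac_sym.IH by blast
    then show "\<exists>u'. subterm u' s \<and> aceq acs u u'" using aceq.ac_sym by blast
  qed
next
  case (ac_trans s t v)
  show ?case
  proof (intro conjI allI impI)
    fix u assume "subterm u v" "guarded u"
    then obtain u' where 1: "subterm u' t" "aceq acs u' u" using ac_trans.IH(2) by blast
    then have "guarded u'" using aceq_guarded \<open>guarded u\<close> by blast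
    then obtain u'' where 2: "subterm u'' s" "aceq acs u'' u'" using ac_trans.IH(1) 1 by blast
    show "\<exists>u'. subterm u' s \<and> aceq acs u' u" using 1 2 aceq.ac_trans[of acs u'' u' u] by blast
  next
    fix u assume "subterm u s" "guarded u"
    then obtain u' where 1: "subterm u' t" "aceq acs u u'" using ac_trans.IH(1) by blast
    then have "guarded u'" using aceq_guarded \<open>guarded u\<close> by blast
    then obtain u'' where 2: "subterm u'' v" "aceq acs u' u''" using ac_trans.IH(2) 1 by blast
    show "\<exists>u'. subterm u' v \<and> aceq acs u u'" using 1 2 aceq.ac_trans[of acs u u' u''] by blast
  qed
next
  case (ac_comm f a b)
  show ?case
  proof (intro conjI allI impI)
    fix u assume u: "subterm u (Fn f [b, a])" "guarded u"
    have "subterm u b \<or> subterm u a" by (rule subterm_Fn2[OF u])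
    then have "subterm u a \<or> subterm u b" by blast
    then have "subterm u (Fn f [a, b])" using sFn2(1)[of u a f b] sFn2(2)[of u b f a] by blast
    then show "\<exists>u'. subterm u' (Fn f [a, b]) \<and> aceq acs u' u" using aceq.ac_refl by blast
  next
    fix u assume u: "subterm u (Fn f [a, b])" "guarded u"
    have "subterm u a \<or> subterm u b" by (rule subterm_Fn2[OF u])
    then have "subterm u (Fn f [b, a])" using sFn2(1)[of u b f a] sFn2(2)[of u a f b] by blast
    then show "\<exists>u'. subterm u' (Fn f [b, a]) \<and> aceq acs u u'" using aceq.ac_refl by blast
  qed
next
  case (ac_assoc f a b c)
  show ?case
  proof (intro conjI allI impI)
    fix u assume u: "subterm u (Fn f [a, Fn f [b, c]])" "guarded u"
    have "subterm u a \<or> subterm u (Fn f [b, c])" by (rule subterm_Fn2[OF u])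
    then have "subterm u a \<or> subterm u b \<or> subterm u c" using subterm_Fn2[of u f b c] u(2) by blast
    then have "subterm u (Fn f [a, b]) \<or> subterm u c" using sFn2(1)[of u a f b] sFn2(2)[of u b f a] by blast
    then have "subterm u (Fn f [Fn f [a, b], c])" using sFn2(1)[of u "Fn f [a, b]" f c] sFn2(2)[of u c f "Fn f [a, b]"] by blast
    then show "\<exists>u'. subterm u' (Fn f [Fn f [a, b], c]) \<and> aceq acs u' u"
      using aceq.ac_refl by blast
  next
    fix u assume u: "subterm u (Fn f [Fn f [a, b], c])" "guarded u"
    have "subterm u (Fn f [a, b]) \<or> subterm u c" by (rule subterm_Fn2[OF u])
    then have "subterm u a \<or> subterm u b \<or> subterm u c" using subterm_Fn2[of u f a b] u(2) by blast
    then have "subterm u a \<or> subterm u (Fn f [b, c])" using sFn2(1)[of u b f c] sFn2(2)[of u c f b] by blast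
    then have "subterm u (Fn f [a, Fn f [b, c]])" using sFn2(1)[of u a f "Fn f [b, c]"] sFn2(2)[of u "Fn f [b, c]" f a] by blast
    then show "\<exists>u'. subterm u' (Fn f [a, Fn f [b, c]]) \<and> aceq acs u u'"
      using aceq.ac_refl by blast
  qed
next
  case (ac_pub s t)
  show ?case
  proof (intro conjI allI impI)
    fix u assume "subterm u (Pub t)" "guarded u"
    then have "u = Pub t \<or> subterm u t" using subterm_Pub_inv by blast
    then show "\<exists>u'. subterm u' (Pub s) \<and> aceq acs u' u"
      using ac_pub by (meson aceq.ac_pub st_pub st_refl \<open>guarded u\<close>)
  next
    fix u assume "subterm u (Pub s)" "guarded u"
    then have "u = Pub s \<or> subterm u s" using subterm_Pub_inv by blast
    then show "\<exists>u'. subterm u' (Pub t) \<and> aceq acs u u'"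
      using ac_pub by (meson aceq.ac_pub st_pub st_refl \<open>guarded u\<close>)
  qed
next
  case (ac_sign s t u v)
  show ?case
  proof (intro conjI allI impI)
    fix w assume "subterm w (Sign t v)" "guarded w"
    then have "w = Sign t v \<or> subterm w t \<or> subterm w v" using subterm_Sign_inv by blast
    then show "\<exists>u'. subterm u' (Sign s u) \<and> aceq acs u' w"
      using ac_sign by (meson aceq.ac_sign st_sign1 st_sign2 st_refl \<open>guarded w\<close>)
  next
    fix w assume "subterm w (Sign s u)" "guarded w"
    then have "w = Sign s u \<or> subterm w s \<or> subterm w u" using subterm_Sign_inv by blast
    then show "\<exists>u'. subterm u' (Sign t v) \<and> aceq acs w u'"
      using ac_sign by (meson aceq.ac_sign st_sign1 st_sign2 st_refl \<open>guarded w\<close>)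
  qed
next
  case (ac_blind s t u v)
  show ?case
  proof (intro conjI allI impI)
    fix w assume "subterm w (Blind t v)" "guarded w"
    then have "w = Blind t v \<or> subterm w t \<or> subterm w v" using subterm_Blind_inv by blast
    then show "\<exists>u'. subterm u' (Blind s u) \<and> aceq acs u' w"
      using ac_blind by (meson aceq.ac_blind st_blind1 st_blind2 st_refl \<open>guarded w\<close>)
  next
    fix w assume "subterm w (Blind s u)" "guarded w"
    then have "w = Blind s u \<or> subterm w s \<or> subterm w u" using subterm_Blind_inv by blast
    then show "\<exists>u'. subterm u' (Blind t v) \<and> aceq acs w u'"
      using ac_blind by (meson aceq.ac_blind st_blind1 st_blind2 st_refl \<open>guarded w\<close>)
  qed
next
  case (ac_pair s t u v)
  show ?case
  proof (intro conjI allI impI)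
    fix w assume "subterm w (Pair t v)" "guarded w"
    then have "w = Pair t v \<or> subterm w t \<or> subterm w v" using subterm_Pair_inv by blast
    then show "\<exists>u'. subterm u' (Pair s u) \<and> aceq acs u' w"
      using ac_pair by (meson aceq.ac_pair st_pair1 st_pair2 st_refl \<open>guarded w\<close>)
  next
    fix w assume "subterm w (Pair s u)" "guarded w"
    then have "w = Pair s u \<or> subterm w s \<or> subterm w u" using subterm_Pair_inv by blast
    then show "\<exists>u'. subterm u' (Pair t v) \<and> aceq acs w u'"
      using ac_pair by (meson aceq.ac_pair st_pair1 st_pair2 st_refl \<open>guarded w\<close>)
  qed
next
  case (ac_enc s t u v)
  show ?case
  proof (intro conjI allI impI)
    fix w assume "subterm w (Enc t v)" "guarded w"
    then have "w = Enc t v \<or> subterm w t \<or> subterm w v" using subterm_Enc_inv by blast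
    then show "\<exists>u'. subterm u' (Enc s u) \<and> aceq acs u' w"
      using ac_enc by (meson aceq.ac_enc st_enc1 st_enc2 st_refl \<open>guarded w\<close>)
  next
    fix w assume "subterm w (Enc s u)" "guarded w"
    then have "w = Enc s u \<or> subterm w s \<or> subterm w u" using subterm_Enc_inv by blast
    then show "\<exists>u'. subterm u' (Enc t v) \<and> aceq acs w u'"
      using ac_enc by (meson aceq.ac_enc st_enc1 st_enc2 st_refl \<open>guarded w\<close>)
  qed
next
  case (ac_fn s t g xs ys)
  show ?case
  proof (intro conjI allI impI)
    fix w assume w: "subterm w (Fn g (xs @ t # ys))" "guarded w"
    then obtain M where M: "M \<in> set (xs @ t # ys)" "subterm w M" using subterm_Fn_guarded[OF w] by blast
    show "\<exists>u'. subterm u' (Fn g (xs @ s # ys)) \<and> aceq acs u' w"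
    proof (cases "M = t")
      case True
      then obtain u' where u': "subterm u' s" "aceq acs u' w" using ac_fn.IH M(2) w(2) by blast
      have "s \<in> set (xs @ s # ys)" by simp
      then have "subterm u' (Fn g (xs @ s # ys))" using st_fn[OF _ u'(1)] by blast
      then show ?thesis using u'(2) by blast
    next
      case False then have "M \<in> set (xs @ s # ys)" using M by auto
      then have "subterm w (Fn g (xs @ s # ys))" using st_fn[OF _ M(2)] by blast
      then show ?thesis using aceq.ac_refl[of acs w] by blast
    qed
  next
    fix w assume w: "subterm w (Fn g (xs @ s # ys))" "guarded w"
    then obtain M where M: "M \<in> set (xs @ s # ys)" "subterm w M" using subterm_Fn_guarded[OF w] by blast
    show "\<exists>u'. subterm u' (Fn g (xs @ t # ys)) \<and> aceq acs w u'"
    proof (cases "M = s")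
      case True
      then obtain u' where u': "subterm u' t" "aceq acs w u'" using ac_fn.IH M(2) w(2) by blast
      have "t \<in> set (xs @ t # ys)" by simp
      then have "subterm u' (Fn g (xs @ t # ys))" using st_fn[OF _ u'(1)] by blast
      then show ?thesis using u'(2) by blast
    next
      case False then have "M \<in> set (xs @ t # ys)" using M by auto
      then have "subterm w (Fn g (xs @ t # ys))" using st_fn[OF _ M(2)] by blast
      then show ?thesis using aceq.ac_refl[of acs w] by blast
    qed
  qed
qed


lemma acsub1: "aceq acs s t \<Longrightarrow> subterm u t \<Longrightarrow> guarded u \<Longrightarrow> \<exists>u'. subterm u' s \<and> aceq acs u' u"
  using acsub by blast
lemma acsub2: "aceq acs s t \<Longrightarrow> subterm u s \<Longrightarrow> guarded u \<Longrightarrow> \<exists>u'. subterm u' t \<and> aceq acs u u'"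
  using acsub by blast

lemma inst_guarded_sub: "subterm u (inst p \<sigma>) \<Longrightarrow> guarded u \<Longrightarrow> \<exists>i\<in>pvars p. subterm u (\<sigma> i)"
proof (induction p)
  case (PV i) then show ?case by simp
next
  case (PF g ps)
  have "subterm u (Fn g (map (\<lambda>p. inst p \<sigma>) ps))" using PF(2) by simp
  then obtain M where "M \<in> set (map (\<lambda>p. inst p \<sigma>) ps)" "subterm u M"
    using subterm_Fn_guarded[OF _ PF(3)] by blast
  then obtain p where p: "p \<in> set ps" "subterm u (inst p \<sigma>)" by auto
  then obtain i where "i \<in> pvars p" "subterm u (\<sigma> i)" using PF(1)[OF p PF(3)] by blast
  then show ?case using p(1) by auto
qed

lemma inst_var_sub: "i \<in> pvars p \<Longrightarrow> subterm (\<sigma> i) (inst p \<sigma>)"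
proof (induction p)
  case (PV j) then show ?case by (simp add: st_refl)
next
  case (PF g ps)
  then obtain p where p: "p \<in> set ps" "i \<in> pvars p" by auto
  have "inst p \<sigma> \<in> set (map (\<lambda>p. inst p \<sigma>) ps)" using p(1) by simp
  then show ?case using st_fn[OF _ PF(1)[OF p]] by simp
qed


lemma conv_refl: "conv acs R s s" unfolding conv_def by simp
lemma conv_trans: "conv acs R s t \<Longrightarrow> conv acs R t u \<Longrightarrow> conv acs R s u"
  unfolding conv_def by simp
lemma conv_sym: "conv acs R s t \<Longrightarrow> conv acs R t s"
  unfolding conv_def
proof (induction rule: rtranclp_induct)
  case base then show ?case by simp
next
  case (step y z)
  have "rstep R z y \<or> rstep R y z \<or> aceq acs z y" using step(2) aceq.ac_sym[of acs y z] by blast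
  then have r: "(\<lambda>s t. rstep R s t \<or> rstep R t s \<or> aceq acs s t) z y" by simp
  show ?case by (rule converse_rtranclp_into_rtranclp[OF r step(3)])
qed
lemma aceq_conv: "aceq acs s t \<Longrightarrow> conv acs R s t" unfolding conv_def by auto
lemma rstep_conv: "rstep R s t \<Longrightarrow> conv acs R s t" unfolding conv_def by auto
lemma rstep_ac_conv: "rstep_ac acs R s t \<Longrightarrow> conv acs R s t"
  unfolding rstep_ac_def by (meson aceq_conv rstep_conv conv_trans)
lemma rtc_rstep_ac_conv: "(rstep_ac acs R)\<^sup>*\<^sup>* s t \<Longrightarrow> conv acs R s t"
  by (induction rule: rtranclp_induct) (auto intro: conv_refl conv_trans rstep_ac_conv)

lemma conv_Fn1: "conv acs R s t \<Longrightarrow> conv acs R (Fn g (xs @ s # ys)) (Fn g (xs @ t # ys))"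
  unfolding conv_def
proof (induction rule: rtranclp_induct)
  case base then show ?case by simp
next
  case (step y z)
  have "rstep R (Fn g (xs @ y # ys)) (Fn g (xs @ z # ys)) \<or> rstep R (Fn g (xs @ z # ys)) (Fn g (xs @ y # ys))
     \<or> aceq acs (Fn g (xs @ y # ys)) (Fn g (xs @ z # ys))"
    using step(2) rs_fn[of R y z g xs ys] rs_fn[of R z y g xs ys] ac_fn[of acs y z g xs ys] by blast
  then have r: "(\<lambda>s t. rstep R s t \<or> rstep R t s \<or> aceq acs s t) (Fn g (xs @ y # ys)) (Fn g (xs @ z # ys))"
    by simp
  show ?case by (rule rtranclp.rtrancl_into_rtrancl[OF step(3) r])
qed

lemma conv_Fn_list: "list_all2 (conv acs R) xs ys \<Longrightarrow> conv acs R (Fn g (pre @ xs)) (Fn g (pre @ ys))"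
proof (induction xs ys arbitrary: pre rule: list_all2_induct)
  case Nil then show ?case by (simp add: conv_refl)
next
  case (Cons x xs y ys)
  have "conv acs R (Fn g (pre @ x # xs)) (Fn g (pre @ y # xs))" using Cons(1) by (rule conv_Fn1)
  moreover have "conv acs R (Fn g ((pre @ [y]) @ xs)) (Fn g ((pre @ [y]) @ ys))" using Cons(3) .
  ultimately show ?case by (simp add: conv_trans)
qed

lemma conv_inst: "(\<forall>i\<in>pvars C. conv acs R (\<sigma> i) (\<sigma>' i)) \<Longrightarrow> conv acs R (inst C \<sigma>) (inst C \<sigma>')"
proof (induction C)
  case (PV x) then show ?case by simp
next
  case (PF g ps)
  have "list_all2 (conv acs R) (map (\<lambda>p. inst p \<sigma>) ps) (map (\<lambda>p. inst p \<sigma>') ps)"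
    unfolding list_all2_map1 list_all2_map2 list_all2_same
  proof
    fix p assume p: "p \<in> set ps"
    then have "\<forall>i\<in>pvars p. conv acs R (\<sigma> i) (\<sigma>' i)" using PF(2) by auto
    then show "conv acs R (inst p \<sigma>) (inst p \<sigma>')" using PF(1)[OF p] by blast
  qed
  then show ?case using conv_Fn_list[where pre="[]"] by fastforce
qed


fun psubst :: "'f pat \<Rightarrow> (nat \<Rightarrow> 'f pat) \<Rightarrow> 'f pat" where
  "psubst (PV i) \<tau> = \<tau> i"
| "psubst (PF g ps) \<tau> = PF g (map (\<lambda>p. psubst p \<tau>) ps)"

lemma inst_psubst: "inst (psubst C \<tau>) \<rho> = inst C (\<lambda>i. inst (\<tau> i) \<rho>)"
  by (induction C) auto

lemma pvars_psubst: "pvars (psubst C \<tau>) = (\<Union>i\<in>pvars C. pvars (\<tau> i))"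
  by (induction C) auto

lemma wf_psubst: "pat_wf ar C \<Longrightarrow> (\<forall>i\<in>pvars C. pat_wf ar (\<tau> i)) \<Longrightarrow> pat_wf ar (psubst C \<tau>)"
  by (induction C) auto

lemma id_ok_mem: "A \<in> \<Gamma> \<Longrightarrow> id_ok ar acs R \<Gamma> A"
  unfolding id_ok_def
  by (rule exI[where x="PV 0"], rule exI[where x="\<lambda>_. A"]) (simp add: conv_refl)

lemma id_ok_mono: "id_ok ar acs R \<Gamma> M \<Longrightarrow> \<Gamma> \<subseteq> \<Gamma>' \<Longrightarrow> id_ok ar acs R \<Gamma>' M"
  unfolding id_ok_def by blast

lemma id_ok_conv: "conv acs R M M' \<Longrightarrow> id_ok ar acs R \<Gamma> M' \<Longrightarrow> id_ok ar acs R \<Gamma> M"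
  unfolding id_ok_def by (meson conv_trans)

lemma id_ok_ac:
  assumes "id_ok ar acs R \<Gamma> M" and "\<forall>x\<in>\<Gamma>. \<exists>y\<in>\<Gamma>'. aceq acs x y"
  shows "id_ok ar acs R \<Gamma>' M"
proof -
  from assms(1) obtain C \<sigma> where C: "pat_wf ar C" "\<forall>i\<in>pvars C. \<sigma> i \<in> \<Gamma>" "conv acs R M (inst C \<sigma>)"
    unfolding id_ok_def by blast
  define \<sigma>' where "\<sigma>' i = (SOME y. y \<in> \<Gamma>' \<and> aceq acs (\<sigma> i) y)" for i
  have h: "\<sigma>' i \<in> \<Gamma>' \<and> aceq acs (\<sigma> i) (\<sigma>' i)" if "i \<in> pvars C" for i
    unfolding \<sigma>'_def by (rule someI_ex) (use assms(2) C(2) that in blast)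
  have "conv acs R (inst C \<sigma>) (inst C \<sigma>')" by (rule conv_inst) (use h aceq_conv in blast)
  then show ?thesis unfolding id_ok_def using C h by (meson conv_trans)
qed

lemma id_ok_comp:
  assumes "id_ok ar acs R \<Gamma> M" and "id_ok ar acs R (insert M \<Gamma>) T"
  shows "id_ok ar acs R \<Gamma> T"
proof -
  from assms(2) obtain C \<sigma> where C: "pat_wf ar C" "\<forall>i\<in>pvars C. \<sigma> i \<in> insert M \<Gamma>" "conv acs R T (inst C \<sigma>)"
    unfolding id_ok_def by blast
  from assms(1) obtain C' \<sigma>' where C': "pat_wf ar C'" "\<forall>i\<in>pvars C'. \<sigma>' i \<in> \<Gamma>" "conv acs R M (inst C' \<sigma>')"
    unfolding id_ok_def by blast
  define \<tau> where "\<tau> i = (if \<sigma> i \<in> \<Gamma> then PV (2*i) else psubst C' (\<lambda>j. PV (2*j+1)))" for i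
  define \<rho> where "\<rho> k = (if even k then \<sigma> (k div 2) else \<sigma>' (k div 2))" for k
  have i1: "inst (psubst C' (\<lambda>j. PV (2*j+1))) \<rho> = inst C' \<sigma>'"
    by (simp add: inst_psubst \<rho>_def)
  have "conv acs R (inst C \<sigma>) (inst C (\<lambda>i. inst (\<tau> i) \<rho>))"
  proof (rule conv_inst, intro ballI)
    fix i assume "i \<in> pvars C"
    show "conv acs R (\<sigma> i) (inst (\<tau> i) \<rho>)"
    proof (cases "\<sigma> i \<in> \<Gamma>")
      case True then show ?thesis by (simp add: \<tau>_def \<rho>_def conv_refl)
    next
      case False then have "\<sigma> i = M" using C(2) \<open>i \<in> pvars C\<close> by blast
      then show ?thesis using False C'(3) i1 by (simp add: \<tau>_def)
    qed
  qed
  then have cv: "conv acs R T (inst (psubst C \<tau>) \<rho>)" using C(3) by (simp add: inst_psubst conv_trans)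
  have wf: "pat_wf ar (psubst C \<tau>)"
    by (rule wf_psubst) (use C(1) C'(1) in \<open>auto simp: \<tau>_def intro!: wf_psubst\<close>)
  have hs: "\<forall>k\<in>pvars (psubst C \<tau>). \<rho> k \<in> \<Gamma>"
  proof
    fix k assume "k \<in> pvars (psubst C \<tau>)"
    then obtain i where i: "i \<in> pvars C" "k \<in> pvars (\<tau> i)" by (auto simp: pvars_psubst)
    show "\<rho> k \<in> \<Gamma>"
    proof (cases "\<sigma> i \<in> \<Gamma>")
      case True then show ?thesis using i by (simp add: \<tau>_def \<rho>_def)
    next
      case False
      then obtain j where "j \<in> pvars C'" "k = 2*j+1" using i by (auto simp: \<tau>_def pvars_psubst)
      then show ?thesis using C'(2) by (simp add: \<rho>_def)
    qed
  qed
  show ?thesis unfolding id_ok_def using wf hs cv by blast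
qed


definition okt :: "('f \<Rightarrow> nat) \<Rightarrow> 'f set \<Rightarrow> ('f pat \<times> 'f pat) set \<Rightarrow> 'f trm \<Rightarrow> bool" where
  "okt ar acs R t \<longleftrightarrow> trm_wf ar t \<and> normal_mod_ac acs R t"

lemma is_seq_okt: "is_seq ar acs R \<Gamma> M \<longleftrightarrow> finite \<Gamma> \<and> okt ar acs R M \<and> (\<forall>N\<in>\<Gamma>. okt ar acs R N)"
  unfolding is_seq_def okt_def by auto

lemma okt_sub: "okt ar acs R t \<Longrightarrow> subterm u t \<Longrightarrow> okt ar acs R u"
  unfolding okt_def using normal_sub wf_sub by blast

lemma okt_args:
  "okt ar acs R (Pub a) \<Longrightarrow> okt ar acs R a"
  "okt ar acs R (Sign a b) \<Longrightarrow> okt ar acs R a" "okt ar acs R (Sign a b) \<Longrightarrow> okt ar acs R b"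
  "okt ar acs R (Blind a b) \<Longrightarrow> okt ar acs R a" "okt ar acs R (Blind a b) \<Longrightarrow> okt ar acs R b"
  "okt ar acs R (Pair a b) \<Longrightarrow> okt ar acs R a" "okt ar acs R (Pair a b) \<Longrightarrow> okt ar acs R b"
  "okt ar acs R (Enc a b) \<Longrightarrow> okt ar acs R a" "okt ar acs R (Enc a b) \<Longrightarrow> okt ar acs R b"
  by (meson okt_sub st_refl subterm.intros)+

lemma derS_seq: "derS ar acs R c \<Gamma> M \<Longrightarrow> is_seq ar acs R \<Gamma> M"
  by (induction rule: derS.induct) auto

lemma derS_okt: "derS ar acs R c \<Gamma> M \<Longrightarrow> okt ar acs R M"
  using derS_seq is_seq_okt by blast


lemma seqD: "is_seq ar acs R \<Gamma> T \<Longrightarrow> finite \<Gamma>" "is_seq ar acs R \<Gamma> T \<Longrightarrow> okt ar acs R T"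
  "is_seq ar acs R \<Gamma> T \<Longrightarrow> N \<in> \<Gamma> \<Longrightarrow> okt ar acs R N"
  by (auto simp: is_seq_okt)

lemma seq_ext: "is_seq ar acs R \<Gamma> T \<Longrightarrow> finite A \<Longrightarrow> \<forall>x\<in>A. okt ar acs R x \<Longrightarrow> okt ar acs R T'
   \<Longrightarrow> is_seq ar acs R (\<Gamma> \<union> A) T'"
  by (auto simp: is_seq_okt)

lemma derS_weak:
  "derS ar acs R c \<Gamma> T \<Longrightarrow> \<Gamma> \<subseteq> \<Gamma>' \<Longrightarrow> is_seq ar acs R \<Gamma>' T \<Longrightarrow> derS ar acs R c \<Gamma>' T"
proof (induction arbitrary: \<Gamma>' rule: derS.induct)
  case (r_id \<Gamma> M c)
  have "id_ok ar acs R \<Gamma>' M" using id_ok_mono[OF r_id.hyps(2) r_id.prems(1)] .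
  then show ?case using derS.r_id[OF r_id.prems(2)] by blast
next
  case (r_cut \<Gamma> T M)
  have oM: "okt ar acs R M" using derS_okt[OF r_cut.hyps(2)] .
  have s1: "is_seq ar acs R \<Gamma>' M" using seq_ext[OF r_cut.prems(2), of "{}" M] oM by simp
  have a: "derS ar acs R True \<Gamma>' M" using r_cut.IH(1)[OF r_cut.prems(1) s1] .
  have s2: "is_seq ar acs R (\<Gamma>' \<union> {M}) T" using seq_ext[OF r_cut.prems(2), of "{M}" T] oM seqD(2)[OF r_cut.prems(2)] by simp
  have sub: "insert M \<Gamma> \<subseteq> \<Gamma>' \<union> {M}" using r_cut.prems(1) by blast
  have "derS ar acs R True (\<Gamma>' \<union> {M}) T" using r_cut.IH(2)[OF sub s2] .
  then have "derS ar acs R True (insert M \<Gamma>') T" by simp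
  then show ?case using derS.r_cut[OF r_cut.prems(2) a] by blast
next
  case (r_pL M N \<Gamma> T c)
  have P: "Pair M N \<in> \<Gamma>'" using r_pL.prems(1) by blast
  have oP: "okt ar acs R (Pair M N)" using seqD(3)[OF r_pL.prems(2) P] .
  have s2: "is_seq ar acs R (\<Gamma>' \<union> {Pair M N, M, N}) T"
    using seq_ext[OF r_pL.prems(2), of "{Pair M N, M, N}" T] oP okt_args(6,7)[OF oP] seqD(2)[OF r_pL.prems(2)] by simp
  have sub: "\<Gamma> \<union> {Pair M N, M, N} \<subseteq> \<Gamma>' \<union> {Pair M N, M, N}" using r_pL.prems(1) by blast
  have d: "derS ar acs R c (\<Gamma>' \<union> {Pair M N, M, N}) T" using r_pL.IH[OF sub s2] .
  have s3: "is_seq ar acs R (insert (Pair M N) \<Gamma>') T" using r_pL.prems(2) P by (simp add: insert_absorb)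
  have "derS ar acs R c (insert (Pair M N) \<Gamma>') T" using derS.r_pL[OF s3 d] .
  then show ?case using P by (simp add: insert_absorb)
next
  case (r_pR \<Gamma> M N c)
  have oT: "okt ar acs R (Pair M N)" using seqD(2)[OF r_pR.prems(2)] .
  have s1: "is_seq ar acs R \<Gamma>' M" using seq_ext[OF r_pR.prems(2), of "{}" M] okt_args(6)[OF oT] by simp
  have s2: "is_seq ar acs R \<Gamma>' N" using seq_ext[OF r_pR.prems(2), of "{}" N] okt_args(7)[OF oT] by simp
  show ?case using derS.r_pR[OF r_pR.prems(2) r_pR.IH(1)[OF r_pR.prems(1) s1] r_pR.IH(2)[OF r_pR.prems(1) s2]] .
next
  case (r_eL M K \<Gamma> N c)
  have P: "Enc M K \<in> \<Gamma>'" using r_eL.prems(1) by blast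
  have oP: "okt ar acs R (Enc M K)" using seqD(3)[OF r_eL.prems(2) P] .
  have s1: "is_seq ar acs R \<Gamma>' K" using seq_ext[OF r_eL.prems(2), of "{}" K] okt_args(9)[OF oP] by simp
  have sub1: "insert (Enc M K) \<Gamma> \<subseteq> \<Gamma>'" using r_eL.prems(1) by blast
  have a: "derS ar acs R c \<Gamma>' K" using r_eL.IH(1)[OF sub1 s1] .
  have s2: "is_seq ar acs R (\<Gamma>' \<union> {Enc M K, M, K}) N"
    using seq_ext[OF r_eL.prems(2), of "{Enc M K, M, K}" N] oP okt_args(8,9)[OF oP] seqD(2)[OF r_eL.prems(2)] by simp
  have sub: "\<Gamma> \<union> {Enc M K, M, K} \<subseteq> \<Gamma>' \<union> {Enc M K, M, K}" using r_eL.prems(1) by blast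
  have d: "derS ar acs R c (\<Gamma>' \<union> {Enc M K, M, K}) N" using r_eL.IH(2)[OF sub s2] .
  have s3: "is_seq ar acs R (insert (Enc M K) \<Gamma>') N" using r_eL.prems(2) P by (simp add: insert_absorb)
  have a': "derS ar acs R c (insert (Enc M K) \<Gamma>') K" using a P by (simp add: insert_absorb)
  have "derS ar acs R c (insert (Enc M K) \<Gamma>') N" using derS.r_eL[OF s3 a' d] .
  then show ?case using P by (simp add: insert_absorb)
next
  case (r_eR \<Gamma> M K c)
  have oT: "okt ar acs R (Enc M K)" using seqD(2)[OF r_eR.prems(2)] .
  have s1: "is_seq ar acs R \<Gamma>' M" using seq_ext[OF r_eR.prems(2), of "{}" M] okt_args(8)[OF oT] by simp
  have s2: "is_seq ar acs R \<Gamma>' K" using seq_ext[OF r_eR.prems(2), of "{}" K] okt_args(9)[OF oT] by simp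
  show ?case using derS.r_eR[OF r_eR.prems(2) r_eR.IH(1)[OF r_eR.prems(1) s1] r_eR.IH(2)[OF r_eR.prems(1) s2]] .
next
  case (r_signL K L \<Gamma> M N c)
  have P: "Sign M K \<in> \<Gamma>'" "Pub L \<in> \<Gamma>'" using r_signL.prems(1) by blast+
  have oP: "okt ar acs R (Sign M K)" using seqD(3)[OF r_signL.prems(2) P(1)] .
  have s2: "is_seq ar acs R (\<Gamma>' \<union> {Sign M K, Pub L, M}) N"
    using seq_ext[OF r_signL.prems(2), of "{Sign M K, Pub L, M}" N] oP seqD(3)[OF r_signL.prems(2) P(2)]
      okt_args(2)[OF oP] seqD(2)[OF r_signL.prems(2)] by simp
  have sub: "\<Gamma> \<union> {Sign M K, Pub L, M} \<subseteq> \<Gamma>' \<union> {Sign M K, Pub L, M}" using r_signL.prems(1) by blast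
  have d: "derS ar acs R c (\<Gamma>' \<union> {Sign M K, Pub L, M}) N" using r_signL.IH[OF sub s2] .
  have eq: "\<Gamma>' \<union> {Sign M K, Pub L} = \<Gamma>'" using P by blast
  have s3: "is_seq ar acs R (\<Gamma>' \<union> {Sign M K, Pub L}) N" using r_signL.prems(2) eq by simp
  have "derS ar acs R c (\<Gamma>' \<union> {Sign M K, Pub L}) N" using derS.r_signL[OF r_signL.hyps(1) s3 d] .
  then show ?case using eq by simp
next
  case (r_signR \<Gamma> M K c)
  have oT: "okt ar acs R (Sign M K)" using seqD(2)[OF r_signR.prems(2)] .
  have s1: "is_seq ar acs R \<Gamma>' M" using seq_ext[OF r_signR.prems(2), of "{}" M] okt_args(2)[OF oT] by simp
  have s2: "is_seq ar acs R \<Gamma>' K" using seq_ext[OF r_signR.prems(2), of "{}" K] okt_args(3)[OF oT] by simp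
  show ?case using derS.r_signR[OF r_signR.prems(2) r_signR.IH(1)[OF r_signR.prems(1) s1] r_signR.IH(2)[OF r_signR.prems(1) s2]] .
next
  case (r_blindL1 M K \<Gamma> N c)
  have P: "Blind M K \<in> \<Gamma>'" using r_blindL1.prems(1) by blast
  have oP: "okt ar acs R (Blind M K)" using seqD(3)[OF r_blindL1.prems(2) P] .
  have s1: "is_seq ar acs R \<Gamma>' K" using seq_ext[OF r_blindL1.prems(2), of "{}" K] okt_args(5)[OF oP] by simp
  have sub1: "insert (Blind M K) \<Gamma> \<subseteq> \<Gamma>'" using r_blindL1.prems(1) by blast
  have a: "derS ar acs R c \<Gamma>' K" using r_blindL1.IH(1)[OF sub1 s1] .
  have s2: "is_seq ar acs R (\<Gamma>' \<union> {Blind M K, M, K}) N"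
    using seq_ext[OF r_blindL1.prems(2), of "{Blind M K, M, K}" N] oP okt_args(4,5)[OF oP] seqD(2)[OF r_blindL1.prems(2)] by simp
  have sub: "\<Gamma> \<union> {Blind M K, M, K} \<subseteq> \<Gamma>' \<union> {Blind M K, M, K}" using r_blindL1.prems(1) by blast
  have d: "derS ar acs R c (\<Gamma>' \<union> {Blind M K, M, K}) N" using r_blindL1.IH(2)[OF sub s2] .
  have s3: "is_seq ar acs R (insert (Blind M K) \<Gamma>') N" using r_blindL1.prems(2) P by (simp add: insert_absorb)
  have a': "derS ar acs R c (insert (Blind M K) \<Gamma>') K" using a P by (simp add: insert_absorb)
  have "derS ar acs R c (insert (Blind M K) \<Gamma>') N" using derS.r_blindL1[OF s3 a' d] .
  then show ?case using P by (simp add: insert_absorb)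
next
  case (r_blindR \<Gamma> M K c)
  have oT: "okt ar acs R (Blind M K)" using seqD(2)[OF r_blindR.prems(2)] .
  have s1: "is_seq ar acs R \<Gamma>' M" using seq_ext[OF r_blindR.prems(2), of "{}" M] okt_args(4)[OF oT] by simp
  have s2: "is_seq ar acs R \<Gamma>' K" using seq_ext[OF r_blindR.prems(2), of "{}" K] okt_args(5)[OF oT] by simp
  show ?case using derS.r_blindR[OF r_blindR.prems(2) r_blindR.IH(1)[OF r_blindR.prems(1) s1] r_blindR.IH(2)[OF r_blindR.prems(1) s2]] .
next
  case (r_blindL2 M Rr K \<Gamma> N c)
  have P: "Sign (Blind M Rr) K \<in> \<Gamma>'" using r_blindL2.prems(1) by blast
  have oP: "okt ar acs R (Sign (Blind M Rr) K)" using seqD(3)[OF r_blindL2.prems(2) P] .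
  have oB: "okt ar acs R (Blind M Rr)" using okt_args(2)[OF oP] .
  have oRr: "okt ar acs R Rr" using okt_args(5)[OF oB] .
  have oS: "okt ar acs R (Sign M K)"
    using derS_seq[OF r_blindL2.hyps(3)] by (simp add: is_seq_okt)
  have s1: "is_seq ar acs R \<Gamma>' Rr" using seq_ext[OF r_blindL2.prems(2), of "{}" Rr] oRr by simp
  have sub1: "insert (Sign (Blind M Rr) K) \<Gamma> \<subseteq> \<Gamma>'" using r_blindL2.prems(1) by blast
  have a: "derS ar acs R c \<Gamma>' Rr" using r_blindL2.IH(1)[OF sub1 s1] .
  have s2: "is_seq ar acs R (\<Gamma>' \<union> {Sign (Blind M Rr) K, Sign M K, Rr}) N"
    using seq_ext[OF r_blindL2.prems(2), of "{Sign (Blind M Rr) K, Sign M K, Rr}" N] oP oS oRr seqD(2)[OF r_blindL2.prems(2)] by simp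
  have sub: "\<Gamma> \<union> {Sign (Blind M Rr) K, Sign M K, Rr} \<subseteq> \<Gamma>' \<union> {Sign (Blind M Rr) K, Sign M K, Rr}"
    using r_blindL2.prems(1) by blast
  have d: "derS ar acs R c (\<Gamma>' \<union> {Sign (Blind M Rr) K, Sign M K, Rr}) N" using r_blindL2.IH(2)[OF sub s2] .
  have s3: "is_seq ar acs R (insert (Sign (Blind M Rr) K) \<Gamma>') N" using r_blindL2.prems(2) P by (simp add: insert_absorb)
  have a': "derS ar acs R c (insert (Sign (Blind M Rr) K) \<Gamma>') Rr" using a P by (simp add: insert_absorb)
  have "derS ar acs R c (insert (Sign (Blind M Rr) K) \<Gamma>') N" using derS.r_blindL2[OF s3 a' d] .
  then show ?case using P by (simp add: insert_absorb)
next
  case (r_gs \<Gamma> M A c)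
  have oA: "okt ar acs R A" using derS_okt[OF r_gs.hyps(4)] .
  have s1: "is_seq ar acs R \<Gamma>' A" using seq_ext[OF r_gs.prems(2), of "{}" A] oA by simp
  have a: "derS ar acs R c \<Gamma>' A" using r_gs.IH(1)[OF r_gs.prems(1) s1] .
  have s2: "is_seq ar acs R (\<Gamma>' \<union> {A}) M" using seq_ext[OF r_gs.prems(2), of "{A}" M] oA seqD(2)[OF r_gs.prems(2)] by simp
  have sub: "insert A \<Gamma> \<subseteq> \<Gamma>' \<union> {A}" using r_gs.prems(1) by blast
  have b: "derS ar acs R c (insert A \<Gamma>') M" using r_gs.IH(2)[OF sub s2] by simp
  have ex: "\<exists>B\<in>insert M \<Gamma>'. subterm A B" using r_gs.hyps(3) r_gs.prems(1) by blast
  show ?case using derS.r_gs[OF r_gs.prems(2) r_gs.hyps(2) ex a b] .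
qed

lemma derS_exQ: "derS ar acs R c \<Gamma> X \<Longrightarrow> \<exists>Q. id_ok ar acs R \<Gamma> Q"
  by (induction rule: derS.induct) (auto intro: id_ok_mem)


lemma aceq_wf: "aceq acs s t \<Longrightarrow> trm_wf ar s = trm_wf ar t"
  by (induction rule: aceq.induct) auto

lemma okt_aceq: "okt ar acs R s \<Longrightarrow> aceq acs s t \<Longrightarrow> okt ar acs R t"
  unfolding okt_def using aceq_wf normal_aceq by blast

lemma cover_ext: "\<forall>x\<in>\<Gamma>. \<exists>y\<in>\<Gamma>'. aceq acs x y \<Longrightarrow> \<forall>x\<in>A. \<exists>y\<in>B. aceq acs x y
  \<Longrightarrow> \<forall>x\<in>\<Gamma> \<union> A. \<exists>y\<in>\<Gamma>' \<union> B. aceq acs x y"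
  by blast

lemma derS_ren:
  "derS ar acs R c \<Gamma> T \<Longrightarrow> \<forall>x\<in>\<Gamma>. \<exists>y\<in>\<Gamma>'. aceq acs x y \<Longrightarrow> aceq acs T T' \<Longrightarrow> is_seq ar acs R \<Gamma>' T'
   \<Longrightarrow> derS ar acs R c \<Gamma>' T'"
proof (induction arbitrary: \<Gamma>' T' rule: derS.induct)
  case (r_id \<Gamma> M c)
  have "id_ok ar acs R \<Gamma>' M" using id_ok_ac[OF r_id.hyps(2) r_id.prems(1)] .
  moreover have "conv acs R T' M" using aceq_conv[OF ac_sym[OF r_id.prems(2)]] .
  ultimately have "id_ok ar acs R \<Gamma>' T'" using id_ok_conv by blast
  then show ?case using derS.r_id[OF r_id.prems(3)] by blast
next
  case (r_cut \<Gamma> T M)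
  have oM: "okt ar acs R M" using derS_okt[OF r_cut.hyps(2)] .
  have s1: "is_seq ar acs R \<Gamma>' M" using seq_ext[OF r_cut.prems(3), of "{}" M] oM by simp
  have a: "derS ar acs R True \<Gamma>' M" using r_cut.IH(1)[OF r_cut.prems(1) ac_refl s1] .
  have s2: "is_seq ar acs R (\<Gamma>' \<union> {M}) T'" using seq_ext[OF r_cut.prems(3), of "{M}" T'] oM seqD(2)[OF r_cut.prems(3)] by simp
  have cv: "\<forall>x\<in>insert M \<Gamma>. \<exists>y\<in>\<Gamma>' \<union> {M}. aceq acs x y" using r_cut.prems(1) ac_refl[of acs M] by blast
  have "derS ar acs R True (\<Gamma>' \<union> {M}) T'" using r_cut.IH(2)[OF cv r_cut.prems(2) s2] .
  then have "derS ar acs R True (insert M \<Gamma>') T'" by simp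
  then show ?case using derS.r_cut[OF r_cut.prems(3) a] by blast
next
  case (r_pL M N \<Gamma> T c)
  obtain y where y: "y \<in> \<Gamma>'" "aceq acs (Pair M N) y" using r_pL.prems(1) by blast
  then obtain M' N' where y': "y = Pair M' N'" "aceq acs M M'" "aceq acs N N'" using aceq_PairD by blast
  have oP: "okt ar acs R (Pair M' N')" using seqD(3)[OF r_pL.prems(3)] y y' by blast
  have s2: "is_seq ar acs R (\<Gamma>' \<union> {Pair M' N', M', N'}) T'"
    using seq_ext[OF r_pL.prems(3), of "{Pair M' N', M', N'}" T'] oP okt_args(6,7)[OF oP] seqD(2)[OF r_pL.prems(3)] by simp
  have cv: "\<forall>x\<in>\<Gamma> \<union> {Pair M N, M, N}. \<exists>y\<in>\<Gamma>' \<union> {Pair M' N', M', N'}. aceq acs x y"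
    using r_pL.prems(1) y y' by auto
  have d: "derS ar acs R c (\<Gamma>' \<union> {Pair M' N', M', N'}) T'" using r_pL.IH[OF cv r_pL.prems(2) s2] .
  have P: "Pair M' N' \<in> \<Gamma>'" using y y' by simp
  have s3: "is_seq ar acs R (insert (Pair M' N') \<Gamma>') T'" using r_pL.prems(3) P by (simp add: insert_absorb)
  have "derS ar acs R c (insert (Pair M' N') \<Gamma>') T'" using derS.r_pL[OF s3 d] .
  then show ?case using P by (simp add: insert_absorb)
next
  case (r_pR \<Gamma> M N c)
  obtain M' N' where T': "T' = Pair M' N'" "aceq acs M M'" "aceq acs N N'" using aceq_PairD[OF r_pR.prems(2)] by blast
  have oT: "okt ar acs R (Pair M' N')" using seqD(2)[OF r_pR.prems(3)] T' by simp
  have s1: "is_seq ar acs R \<Gamma>' M'" using seq_ext[OF r_pR.prems(3), of "{}" M'] okt_args(6)[OF oT] by simp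
  have s2: "is_seq ar acs R \<Gamma>' N'" using seq_ext[OF r_pR.prems(3), of "{}" N'] okt_args(7)[OF oT] by simp
  show ?case using derS.r_pR[OF _ r_pR.IH(1)[OF r_pR.prems(1) T'(2) s1] r_pR.IH(2)[OF r_pR.prems(1) T'(3) s2]] r_pR.prems(3) T'(1) by simp
next
  case (r_eL M K \<Gamma> N c)
  obtain y where y: "y \<in> \<Gamma>'" "aceq acs (Enc M K) y" using r_eL.prems(1) by blast
  then obtain M' K' where y': "y = Enc M' K'" "aceq acs M M'" "aceq acs K K'" using aceq_EncD by blast
  have oP: "okt ar acs R (Enc M' K')" using seqD(3)[OF r_eL.prems(3)] y y' by blast
  have P: "Enc M' K' \<in> \<Gamma>'" using y y' by simp
  have s1: "is_seq ar acs R \<Gamma>' K'" using seq_ext[OF r_eL.prems(3), of "{}" K'] okt_args(9)[OF oP] by simp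
  have cv1: "\<forall>x\<in>insert (Enc M K) \<Gamma>. \<exists>y\<in>\<Gamma>'. aceq acs x y" using r_eL.prems(1) y by auto
  have a: "derS ar acs R c \<Gamma>' K'" using r_eL.IH(1)[OF cv1 y'(3) s1] .
  have s2: "is_seq ar acs R (\<Gamma>' \<union> {Enc M' K', M', K'}) T'"
    using seq_ext[OF r_eL.prems(3), of "{Enc M' K', M', K'}" T'] oP okt_args(8,9)[OF oP] seqD(2)[OF r_eL.prems(3)] by simp
  have cv: "\<forall>x\<in>\<Gamma> \<union> {Enc M K, M, K}. \<exists>y\<in>\<Gamma>' \<union> {Enc M' K', M', K'}. aceq acs x y"
    using r_eL.prems(1) y y' by auto
  have d: "derS ar acs R c (\<Gamma>' \<union> {Enc M' K', M', K'}) T'" using r_eL.IH(2)[OF cv r_eL.prems(2) s2] .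
  have s3: "is_seq ar acs R (insert (Enc M' K') \<Gamma>') T'" using r_eL.prems(3) P by (simp add: insert_absorb)
  have a': "derS ar acs R c (insert (Enc M' K') \<Gamma>') K'" using a P by (simp add: insert_absorb)
  have "derS ar acs R c (insert (Enc M' K') \<Gamma>') T'" using derS.r_eL[OF s3 a' d] .
  then show ?case using P by (simp add: insert_absorb)
next
  case (r_eR \<Gamma> M K c)
  obtain M' K' where T': "T' = Enc M' K'" "aceq acs M M'" "aceq acs K K'" using aceq_EncD[OF r_eR.prems(2)] by blast
  have oT: "okt ar acs R (Enc M' K')" using seqD(2)[OF r_eR.prems(3)] T' by simp
  have s1: "is_seq ar acs R \<Gamma>' M'" using seq_ext[OF r_eR.prems(3), of "{}" M'] okt_args(8)[OF oT] by simp
  have s2: "is_seq ar acs R \<Gamma>' K'" using seq_ext[OF r_eR.prems(3), of "{}" K'] okt_args(9)[OF oT] by simp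
  show ?case using derS.r_eR[OF _ r_eR.IH(1)[OF r_eR.prems(1) T'(2) s1] r_eR.IH(2)[OF r_eR.prems(1) T'(3) s2]] r_eR.prems(3) T'(1) by simp
next
  case (r_signL K L \<Gamma> M N c)
  obtain y where y: "y \<in> \<Gamma>'" "aceq acs (Sign M K) y" using r_signL.prems(1) by blast
  then obtain M' K' where y': "y = Sign M' K'" "aceq acs M M'" "aceq acs K K'" using aceq_SignD by blast
  obtain z where z: "z \<in> \<Gamma>'" "aceq acs (Pub L) z" using r_signL.prems(1) by blast
  then obtain L' where z': "z = Pub L'" "aceq acs L L'" using aceq_PubD by blast
  have KL: "aceq acs K' L'" using ac_trans[OF ac_trans[OF ac_sym[OF y'(3)] r_signL.hyps(1)] z'(2)] .
  have oP: "okt ar acs R (Sign M' K')" using seqD(3)[OF r_signL.prems(3)] y y' by blast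
  have P: "Sign M' K' \<in> \<Gamma>'" "Pub L' \<in> \<Gamma>'" using y y' z z' by simp_all
  have s2: "is_seq ar acs R (\<Gamma>' \<union> {Sign M' K', Pub L', M'}) T'"
    using seq_ext[OF r_signL.prems(3), of "{Sign M' K', Pub L', M'}" T'] oP seqD(3)[OF r_signL.prems(3) P(2)]
      okt_args(2)[OF oP] seqD(2)[OF r_signL.prems(3)] by simp
  have cv: "\<forall>x\<in>\<Gamma> \<union> {Sign M K, Pub L, M}. \<exists>y\<in>\<Gamma>' \<union> {Sign M' K', Pub L', M'}. aceq acs x y"
    using r_signL.prems(1) y y' z z' by auto
  have d: "derS ar acs R c (\<Gamma>' \<union> {Sign M' K', Pub L', M'}) T'" using r_signL.IH[OF cv r_signL.prems(2) s2] .
  have eq: "\<Gamma>' \<union> {Sign M' K', Pub L'} = \<Gamma>'" using P by blast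
  have s3: "is_seq ar acs R (\<Gamma>' \<union> {Sign M' K', Pub L'}) T'" using r_signL.prems(3) eq by simp
  have "derS ar acs R c (\<Gamma>' \<union> {Sign M' K', Pub L'}) T'" using derS.r_signL[OF KL s3 d] .
  then show ?case using eq by simp
next
  case (r_signR \<Gamma> M K c)
  obtain M' K' where T': "T' = Sign M' K'" "aceq acs M M'" "aceq acs K K'" using aceq_SignD[OF r_signR.prems(2)] by blast
  have oT: "okt ar acs R (Sign M' K')" using seqD(2)[OF r_signR.prems(3)] T' by simp
  have s1: "is_seq ar acs R \<Gamma>' M'" using seq_ext[OF r_signR.prems(3), of "{}" M'] okt_args(2)[OF oT] by simp
  have s2: "is_seq ar acs R \<Gamma>' K'" using seq_ext[OF r_signR.prems(3), of "{}" K'] okt_args(3)[OF oT] by simp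
  show ?case using derS.r_signR[OF _ r_signR.IH(1)[OF r_signR.prems(1) T'(2) s1] r_signR.IH(2)[OF r_signR.prems(1) T'(3) s2]] r_signR.prems(3) T'(1) by simp
next
  case (r_blindL1 M K \<Gamma> N c)
  obtain y where y: "y \<in> \<Gamma>'" "aceq acs (Blind M K) y" using r_blindL1.prems(1) by blast
  then obtain M' K' where y': "y = Blind M' K'" "aceq acs M M'" "aceq acs K K'" using aceq_BlindD by blast
  have oP: "okt ar acs R (Blind M' K')" using seqD(3)[OF r_blindL1.prems(3)] y y' by blast
  have P: "Blind M' K' \<in> \<Gamma>'" using y y' by simp
  have s1: "is_seq ar acs R \<Gamma>' K'" using seq_ext[OF r_blindL1.prems(3), of "{}" K'] okt_args(5)[OF oP] by simp
  have cv1: "\<forall>x\<in>insert (Blind M K) \<Gamma>. \<exists>y\<in>\<Gamma>'. aceq acs x y" using r_blindL1.prems(1) y by auto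
  have a: "derS ar acs R c \<Gamma>' K'" using r_blindL1.IH(1)[OF cv1 y'(3) s1] .
  have s2: "is_seq ar acs R (\<Gamma>' \<union> {Blind M' K', M', K'}) T'"
    using seq_ext[OF r_blindL1.prems(3), of "{Blind M' K', M', K'}" T'] oP okt_args(4,5)[OF oP] seqD(2)[OF r_blindL1.prems(3)] by simp
  have cv: "\<forall>x\<in>\<Gamma> \<union> {Blind M K, M, K}. \<exists>y\<in>\<Gamma>' \<union> {Blind M' K', M', K'}. aceq acs x y"
    using r_blindL1.prems(1) y y' by auto
  have d: "derS ar acs R c (\<Gamma>' \<union> {Blind M' K', M', K'}) T'" using r_blindL1.IH(2)[OF cv r_blindL1.prems(2) s2] .
  have s3: "is_seq ar acs R (insert (Blind M' K') \<Gamma>') T'" using r_blindL1.prems(3) P by (simp add: insert_absorb)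
  have a': "derS ar acs R c (insert (Blind M' K') \<Gamma>') K'" using a P by (simp add: insert_absorb)
  have "derS ar acs R c (insert (Blind M' K') \<Gamma>') T'" using derS.r_blindL1[OF s3 a' d] .
  then show ?case using P by (simp add: insert_absorb)
next
  case (r_blindR \<Gamma> M K c)
  obtain M' K' where T': "T' = Blind M' K'" "aceq acs M M'" "aceq acs K K'" using aceq_BlindD[OF r_blindR.prems(2)] by blast
  have oT: "okt ar acs R (Blind M' K')" using seqD(2)[OF r_blindR.prems(3)] T' by simp
  have s1: "is_seq ar acs R \<Gamma>' M'" using seq_ext[OF r_blindR.prems(3), of "{}" M'] okt_args(4)[OF oT] by simp
  have s2: "is_seq ar acs R \<Gamma>' K'" using seq_ext[OF r_blindR.prems(3), of "{}" K'] okt_args(5)[OF oT] by simp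
  show ?case using derS.r_blindR[OF _ r_blindR.IH(1)[OF r_blindR.prems(1) T'(2) s1] r_blindR.IH(2)[OF r_blindR.prems(1) T'(3) s2]] r_blindR.prems(3) T'(1) by simp
next
  case (r_blindL2 M Rr K \<Gamma> N c)
  obtain y where y: "y \<in> \<Gamma>'" "aceq acs (Sign (Blind M Rr) K) y" using r_blindL2.prems(1) by blast
  then obtain B' K' where y1: "y = Sign B' K'" "aceq acs (Blind M Rr) B'" "aceq acs K K'" using aceq_SignD by blast
  then obtain M' Rr' where y2: "B' = Blind M' Rr'" "aceq acs M M'" "aceq acs Rr Rr'" using aceq_BlindD by blast
  have P: "Sign (Blind M' Rr') K' \<in> \<Gamma>'" using y y1 y2 by simp
  have oP: "okt ar acs R (Sign (Blind M' Rr') K')" using seqD(3)[OF r_blindL2.prems(3) P] .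
  have oRr: "okt ar acs R Rr'" using okt_args(5)[OF okt_args(2)[OF oP]] .
  have oS0: "okt ar acs R (Sign M K)" using derS_seq[OF r_blindL2.hyps(3)] by (simp add: is_seq_okt)
  have eqS: "aceq acs (Sign M K) (Sign M' K')" using ac_sign[OF y2(2) y1(3)] .
  have oS: "okt ar acs R (Sign M' K')" using okt_aceq[OF oS0 eqS] .
  have s1: "is_seq ar acs R \<Gamma>' Rr'" using seq_ext[OF r_blindL2.prems(3), of "{}" Rr'] oRr by simp
  have cv1: "\<forall>x\<in>insert (Sign (Blind M Rr) K) \<Gamma>. \<exists>y\<in>\<Gamma>'. aceq acs x y" using r_blindL2.prems(1) y by auto
  have a: "derS ar acs R c \<Gamma>' Rr'" using r_blindL2.IH(1)[OF cv1 y2(3) s1] .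
  have s2: "is_seq ar acs R (\<Gamma>' \<union> {Sign (Blind M' Rr') K', Sign M' K', Rr'}) T'"
    using seq_ext[OF r_blindL2.prems(3), of "{Sign (Blind M' Rr') K', Sign M' K', Rr'}" T'] oP oS oRr seqD(2)[OF r_blindL2.prems(3)] by simp
  have cv: "\<forall>x\<in>\<Gamma> \<union> {Sign (Blind M Rr) K, Sign M K, Rr}. \<exists>y\<in>\<Gamma>' \<union> {Sign (Blind M' Rr') K', Sign M' K', Rr'}. aceq acs x y"
    using r_blindL2.prems(1) y y1 y2 eqS by auto
  have d: "derS ar acs R c (\<Gamma>' \<union> {Sign (Blind M' Rr') K', Sign M' K', Rr'}) T'" using r_blindL2.IH(2)[OF cv r_blindL2.prems(2) s2] .
  have s3: "is_seq ar acs R (insert (Sign (Blind M' Rr') K') \<Gamma>') T'" using r_blindL2.prems(3) P by (simp add: insert_absorb)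
  have a': "derS ar acs R c (insert (Sign (Blind M' Rr') K') \<Gamma>') Rr'" using a P by (simp add: insert_absorb)
  have "derS ar acs R c (insert (Sign (Blind M' Rr') K') \<Gamma>') T'" using derS.r_blindL2[OF s3 a' d] .
  then show ?case using P by (simp add: insert_absorb)
next
  case (r_gs \<Gamma> M A c)
  obtain B where B: "B \<in> insert M \<Gamma>" "subterm A B" using r_gs.hyps(3) by blast
  have "\<exists>B'\<in>insert T' \<Gamma>'. aceq acs B B'"
  proof (cases "B = M")
    case True then show ?thesis using r_gs.prems(2) by blast
  next
    case False then have "B \<in> \<Gamma>" using B(1) by blast
    then show ?thesis using r_gs.prems(1) by blast
  qed
  then obtain B' where B': "B' \<in> insert T' \<Gamma>'" "aceq acs B B'" by blast
  obtain A' where A': "subterm A' B'" "aceq acs A A'" using acsub2[OF B'(2) B(2) r_gs.hyps(2)] by blast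
  have gA': "guarded A'" using aceq_guarded[OF A'(2)] r_gs.hyps(2) by simp
  have oB': "okt ar acs R B'" using B'(1) seqD(2,3)[OF r_gs.prems(3)] by blast
  have oA: "okt ar acs R A'" using okt_sub[OF oB' A'(1)] .
  have s1: "is_seq ar acs R \<Gamma>' A'" using seq_ext[OF r_gs.prems(3), of "{}" A'] oA by simp
  have a: "derS ar acs R c \<Gamma>' A'" using r_gs.IH(1)[OF r_gs.prems(1) A'(2) s1] .
  have s2: "is_seq ar acs R (\<Gamma>' \<union> {A'}) T'" using seq_ext[OF r_gs.prems(3), of "{A'}" T'] oA seqD(2)[OF r_gs.prems(3)] by simp
  have cv: "\<forall>x\<in>insert A \<Gamma>. \<exists>y\<in>\<Gamma>' \<union> {A'}. aceq acs x y" using r_gs.prems(1) A'(2) by auto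
  have b: "derS ar acs R c (insert A' \<Gamma>') T'" using r_gs.IH(2)[OF cv r_gs.prems(2) s2] by simp
  have ex: "\<exists>B\<in>insert T' \<Gamma>'. subterm A' B" using B'(1) A'(1) by blast
  show ?case using derS.r_gs[OF r_gs.prems(3) gA' ex a b] .
qed




lemma rstep_not_normal: "rstep R s t \<Longrightarrow> \<not> normal_mod_ac acs R s"
  unfolding normal_mod_ac_def rstep_ac_def using ac_refl by blast

lemma normal_rtc: "(rstep_ac acs R)\<^sup>*\<^sup>* s t \<Longrightarrow> normal_mod_ac acs R s \<Longrightarrow> t = s"
  by (induction rule: converse_rtranclp_induct) (auto simp: normal_mod_ac_def)

lemma rstep_gsub:
  assumes RV: "\<forall>(l, r)\<in>R. pvars r \<subseteq> pvars l"
  shows "rstep R s t \<Longrightarrow> (\<forall>u. subterm u s \<longrightarrow> guarded u \<longrightarrow> normal_mod_ac acs R u)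
     \<Longrightarrow> subterm u t \<Longrightarrow> guarded u \<Longrightarrow> subterm u s"
proof (induction arbitrary: u rule: rstep.induct)
  case (rs_root l r \<sigma>)
  obtain i where i: "i \<in> pvars r" "subterm u (\<sigma> i)" using inst_guarded_sub[OF rs_root.prems(2,3)] by blast
  have il: "i \<in> pvars l" using RV rs_root.hyps i(1) by blast
  show ?case using subterm_trans[OF inst_var_sub[OF il, of \<sigma>] i(2)] .
next
  case (rs_pub s t)
  have "normal_mod_ac acs R (Pub s)" using rs_pub.prems(1)[rule_format, OF st_refl] by simp
  then show ?case using rstep_not_normal[OF rstep.rs_pub[OF rs_pub.hyps]] by blast
next
  case (rs_sign1 s t w)
  have "normal_mod_ac acs R (Sign s w)" using rs_sign1.prems(1)[rule_format, OF st_refl] by simp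
  then show ?case using rstep_not_normal[OF rstep.rs_sign1[OF rs_sign1.hyps]] by blast
next
  case (rs_sign2 s t w)
  have "normal_mod_ac acs R (Sign w s)" using rs_sign2.prems(1)[rule_format, OF st_refl] by simp
  then show ?case using rstep_not_normal[OF rstep.rs_sign2[OF rs_sign2.hyps]] by blast
next
  case (rs_blind1 s t w)
  have "normal_mod_ac acs R (Blind s w)" using rs_blind1.prems(1)[rule_format, OF st_refl] by simp
  then show ?case using rstep_not_normal[OF rstep.rs_blind1[OF rs_blind1.hyps]] by blast
next
  case (rs_blind2 s t w)
  have "normal_mod_ac acs R (Blind w s)" using rs_blind2.prems(1)[rule_format, OF st_refl] by simp
  then show ?case using rstep_not_normal[OF rstep.rs_blind2[OF rs_blind2.hyps]] by blast
next
  case (rs_pair1 s t w)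
  have "normal_mod_ac acs R (Pair s w)" using rs_pair1.prems(1)[rule_format, OF st_refl] by simp
  then show ?case using rstep_not_normal[OF rstep.rs_pair1[OF rs_pair1.hyps]] by blast
next
  case (rs_pair2 s t w)
  have "normal_mod_ac acs R (Pair w s)" using rs_pair2.prems(1)[rule_format, OF st_refl] by simp
  then show ?case using rstep_not_normal[OF rstep.rs_pair2[OF rs_pair2.hyps]] by blast
next
  case (rs_enc1 s t w)
  have "normal_mod_ac acs R (Enc s w)" using rs_enc1.prems(1)[rule_format, OF st_refl] by simp
  then show ?case using rstep_not_normal[OF rstep.rs_enc1[OF rs_enc1.hyps]] by blast
next
  case (rs_enc2 s t w)
  have "normal_mod_ac acs R (Enc w s)" using rs_enc2.prems(1)[rule_format, OF st_refl] by simp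
  then show ?case using rstep_not_normal[OF rstep.rs_enc2[OF rs_enc2.hyps]] by blast
next
  case (rs_fn s t g xs ys)
  obtain M where M: "M \<in> set (xs @ t # ys)" "subterm u M" using subterm_Fn_guarded[OF rs_fn.prems(2,3)] by blast
  have sin: "s \<in> set (xs @ s # ys)" by simp
  show ?case
  proof (cases "M = t")
    case True
    have "\<forall>v. subterm v s \<longrightarrow> guarded v \<longrightarrow> normal_mod_ac acs R v"
    proof (intro allI impI)
      fix v assume "subterm v s" "guarded v"
      then have "subterm v (Fn g (xs @ s # ys))" using st_fn[OF sin] by blast
      then show "normal_mod_ac acs R v" using rs_fn.prems(1) \<open>guarded v\<close> by blast
    qed
    then have "subterm u s" using rs_fn.IH M True rs_fn.prems(3) by blast
    then show ?thesis using st_fn[OF sin] by blast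
  next
    case False then have "M \<in> set (xs @ s # ys)" using M by auto
    then show ?thesis using st_fn[OF _ M(2)] by blast
  qed
qed

definition Inv :: "'f set \<Rightarrow> 'f trm set \<Rightarrow> 'f trm \<Rightarrow> bool" where
  "Inv acs S t \<longleftrightarrow> (\<forall>u. subterm u t \<longrightarrow> guarded u \<longrightarrow> (\<exists>v\<in>S. aceq acs u v))"

lemma Inv_normal: "Inv acs S t \<Longrightarrow> \<forall>v\<in>S. normal_mod_ac acs R v \<Longrightarrow> subterm u t \<Longrightarrow> guarded u
   \<Longrightarrow> normal_mod_ac acs R u"
proof -
  assume a: "Inv acs S t" "\<forall>v\<in>S. normal_mod_ac acs R v" "subterm u t" "guarded u"
  then obtain v where "v \<in> S" "aceq acs u v" unfolding Inv_def by blast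
  then show ?thesis using normal_aceq[of acs R v u] ac_sym a(2) by blast
qed

lemma Inv_aceq: "Inv acs S s \<Longrightarrow> aceq acs s t \<Longrightarrow> Inv acs S t"
  unfolding Inv_def
proof (intro allI impI)
  fix u assume a: "\<forall>u. subterm u s \<longrightarrow> guarded u \<longrightarrow> (\<exists>v\<in>S. aceq acs u v)" "aceq acs s t" "subterm u t" "guarded u"
  obtain u' where u': "subterm u' s" "aceq acs u' u" using acsub1[OF a(2) a(3) a(4)] by blast
  have "guarded u'" using aceq_guarded[OF u'(2)] a(4) by simp
  then obtain v where "v \<in> S" "aceq acs u' v" using a(1) u'(1) by blast
  then show "\<exists>v\<in>S. aceq acs u v" using ac_trans[OF ac_sym[OF u'(2)]] by blast
qed

lemma Inv_step:
  assumes RV: "\<forall>(l, r)\<in>R. pvars r \<subseteq> pvars l" and N: "\<forall>v\<in>S. normal_mod_ac acs R v"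
  shows "rstep_ac acs R s t \<Longrightarrow> Inv acs S s \<Longrightarrow> Inv acs S t"
proof -
  assume "rstep_ac acs R s t" "Inv acs S s"
  then obtain s' t' where st: "aceq acs s s'" "rstep R s' t'" "aceq acs t' t" unfolding rstep_ac_def by blast
  have I1: "Inv acs S s'" using Inv_aceq[OF \<open>Inv acs S s\<close> st(1)] .
  have nn: "\<forall>u. subterm u s' \<longrightarrow> guarded u \<longrightarrow> normal_mod_ac acs R u"
    using Inv_normal[OF I1 N] by blast
  have "Inv acs S t'" unfolding Inv_def
  proof (intro allI impI)
    fix u assume "subterm u t'" "guarded u"
    then have "subterm u s'" using rstep_gsub[OF RV st(2) nn] by blast
    then show "\<exists>v\<in>S. aceq acs u v" using I1 \<open>guarded u\<close> unfolding Inv_def by blast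
  qed
  then show "Inv acs S t" using Inv_aceq st(3) by blast
qed

lemma Inv_rtc:
  assumes RV: "\<forall>(l, r)\<in>R. pvars r \<subseteq> pvars l" and N: "\<forall>v\<in>S. normal_mod_ac acs R v"
  shows "(rstep_ac acs R)\<^sup>*\<^sup>* s t \<Longrightarrow> Inv acs S s \<Longrightarrow> Inv acs S t"
proof (induction rule: rtranclp_induct)
  case base then show ?case .
next
  case (step y z) then show ?case using Inv_step[OF RV N step(2)] by blast
qed

lemma Inv_inst: "\<forall>i\<in>pvars C. \<sigma> i \<in> \<Gamma> \<Longrightarrow> Inv acs {v. \<exists>w\<in>\<Gamma>. subterm v w} (inst C \<sigma>)"
  unfolding Inv_def
proof (intro allI impI)
  fix u assume a: "\<forall>i\<in>pvars C. \<sigma> i \<in> \<Gamma>" "subterm u (inst C \<sigma>)" "guarded u"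
  obtain i where "i \<in> pvars C" "subterm u (\<sigma> i)" using inst_guarded_sub[OF a(2,3)] by blast
  then have "u \<in> {v. \<exists>w\<in>\<Gamma>. subterm v w}" using a(1) by blast
  then show "\<exists>v\<in>{v. \<exists>w\<in>\<Gamma>. subterm v w}. aceq acs u v" using ac_refl by blast
qed

lemma id_ok_guarded_sub:
  assumes RV: "\<forall>(l, r)\<in>R. pvars r \<subseteq> pvars l" and CF: "confluent_mod_ac acs R"
    and G: "\<forall>w\<in>\<Gamma>. okt ar acs R w" and M: "okt ar acs R M" and id: "id_ok ar acs R \<Gamma> M"
    and u: "subterm u M" "guarded u"
  shows "\<exists>w\<in>\<Gamma>. \<exists>v. subterm v w \<and> aceq acs u v"
proof -
  from id obtain C \<sigma> where C: "\<forall>i\<in>pvars C. \<sigma> i \<in> \<Gamma>" "conv acs R M (inst C \<sigma>)"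
    unfolding id_ok_def by blast
  obtain M'' t' where j: "(rstep_ac acs R)\<^sup>*\<^sup>* M M''" "(rstep_ac acs R)\<^sup>*\<^sup>* (inst C \<sigma>) t'" "aceq acs M'' t'"
    using CF C(2) unfolding confluent_mod_ac_def by blast
  have nM: "normal_mod_ac acs R M" using M by (simp add: okt_def)
  have "M'' = M" using normal_rtc[OF j(1) nM] .
  define S where "S = {v. \<exists>w\<in>\<Gamma>. subterm v w}"
  have NS: "\<forall>v\<in>S. normal_mod_ac acs R v"
  proof
    fix v assume "v \<in> S"
    then obtain w where "w \<in> \<Gamma>" "subterm v w" unfolding S_def by blast
    then show "normal_mod_ac acs R v" using normal_sub[of v w acs R] G by (auto simp: okt_def)
  qed
  have "Inv acs S (inst C \<sigma>)" using Inv_inst[OF C(1)] unfolding S_def .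
  then have "Inv acs S t'" using Inv_rtc[OF RV NS j(2)] by blast
  then have "Inv acs S M" using Inv_aceq[of acs S t' M] ac_sym[OF j(3)] \<open>M'' = M\<close> by blast
  then obtain v where "v \<in> S" "aceq acs u v" using u unfolding Inv_def by blast
  then show ?thesis unfolding S_def by blast
qed


fun repl :: "'f set \<Rightarrow> 'f trm \<Rightarrow> 'f trm \<Rightarrow> 'f trm \<Rightarrow> 'f trm" where
  "repl acs P Q (Nm n) = (if aceq acs (Nm n) P then Q else Nm n)"
| "repl acs P Q (Vr n) = (if aceq acs (Vr n) P then Q else Vr n)"
| "repl acs P Q (Pub a) = (if aceq acs (Pub a) P then Q else Pub (repl acs P Q a))"
| "repl acs P Q (Sign a b) = (if aceq acs (Sign a b) P then Q else Sign (repl acs P Q a) (repl acs P Q b))"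
| "repl acs P Q (Blind a b) = (if aceq acs (Blind a b) P then Q else Blind (repl acs P Q a) (repl acs P Q b))"
| "repl acs P Q (Pair a b) = (if aceq acs (Pair a b) P then Q else Pair (repl acs P Q a) (repl acs P Q b))"
| "repl acs P Q (Enc a b) = (if aceq acs (Enc a b) P then Q else Enc (repl acs P Q a) (repl acs P Q b))"
| "repl acs P Q (Fn g ts) = (if aceq acs (Fn g ts) P then Q else Fn g (map (repl acs P Q) ts))"

lemma repl_Fn: "guarded P \<Longrightarrow> repl acs P Q (Fn g ts) = Fn g (map (repl acs P Q) ts)"
proof -
  assume "guarded P"
  then have "\<not> aceq acs (Fn g ts) P" using aceq_guarded[of acs "Fn g ts" P] by auto
  then show ?thesis by simp
qed

lemma repl_inst: "guarded P \<Longrightarrow> repl acs P Q (inst p \<sigma>) = inst p (\<lambda>i. repl acs P Q (\<sigma> i))"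
proof (induction p)
  case (PV x) then show ?case by simp
next
  case (PF g ps)
  have "repl acs P Q (inst (PF g ps) \<sigma>) = Fn g (map (repl acs P Q) (map (\<lambda>p. inst p \<sigma>) ps))"
    by (simp only: inst.simps repl_Fn[OF PF.prems])
  also have "\<dots> = inst (PF g ps) (\<lambda>i. repl acs P Q (\<sigma> i))" using PF.IH PF.prems by simp
  finally show ?case .
qed

lemma repl_self: "repl acs P Q P = Q"
  by (cases P) (auto simp: ac_refl)

lemma repl_id: "(\<forall>u. subterm u t \<longrightarrow> \<not> aceq acs u P) \<Longrightarrow> repl acs P Q t = t"
proof (induction t)
  case (Nm x) then show ?case using st_refl[of "Nm x"] by auto
next
  case (Vr x) then show ?case using st_refl[of "Vr x"] by auto
next
  case (Pub t)
  have "\<forall>u. subterm u t \<longrightarrow> \<not> aceq acs u P" using Pub.prems st_pub by blast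
  then show ?case using Pub.IH Pub.prems st_refl[of "Pub t"] by auto
next
  case (Sign t1 t2)
  have "\<forall>u. subterm u t1 \<longrightarrow> \<not> aceq acs u P" "\<forall>u. subterm u t2 \<longrightarrow> \<not> aceq acs u P"
    using Sign.prems st_sign1 st_sign2 by blast+
  then show ?case using Sign.IH Sign.prems st_refl[of "Sign t1 t2"] by auto
next
  case (Blind t1 t2)
  have "\<forall>u. subterm u t1 \<longrightarrow> \<not> aceq acs u P" "\<forall>u. subterm u t2 \<longrightarrow> \<not> aceq acs u P"
    using Blind.prems st_blind1 st_blind2 by blast+
  then show ?case using Blind.IH Blind.prems st_refl[of "Blind t1 t2"] by auto
next
  case (Pair t1 t2)
  have "\<forall>u. subterm u t1 \<longrightarrow> \<not> aceq acs u P" "\<forall>u. subterm u t2 \<longrightarrow> \<not> aceq acs u P"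
    using Pair.prems st_pair1 st_pair2 by blast+
  then show ?case using Pair.IH Pair.prems st_refl[of "Pair t1 t2"] by auto
next
  case (Enc t1 t2)
  have "\<forall>u. subterm u t1 \<longrightarrow> \<not> aceq acs u P" "\<forall>u. subterm u t2 \<longrightarrow> \<not> aceq acs u P"
    using Enc.prems st_enc1 st_enc2 by blast+
  then show ?case using Enc.IH Enc.prems st_refl[of "Enc t1 t2"] by auto
next
  case (Fn g ts)
  have "\<forall>x\<in>set ts. repl acs P Q x = x"
  proof
    fix x assume x: "x \<in> set ts"
    have "\<forall>u. subterm u x \<longrightarrow> \<not> aceq acs u P" using Fn.prems st_fn[OF x] by blast
    then show "repl acs P Q x = x" using Fn.IH[OF x] by blast
  qed
  moreover have "\<not> aceq acs (Fn g ts) P" using Fn.prems st_refl[of "Fn g ts"] by blast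
  ultimately show ?case by (simp add: map_idI)
qed

lemma repl_aceq: "aceq acs s t \<Longrightarrow> guarded P \<Longrightarrow> aceq acs (repl acs P Q s) (repl acs P Q t)"
proof (induction rule: aceq.induct)
  case (ac_refl s) then show ?case by (simp add: aceq.ac_refl)
next
  case (ac_sym s t) then show ?case using aceq.ac_sym by blast
next
  case (ac_trans s t u) then show ?case using aceq.ac_trans by blast
next
  case (ac_comm f a b) show ?case
    by (simp only: repl_Fn[OF ac_comm.prems] list.map) (rule aceq.ac_comm[OF ac_comm.hyps])
next
  case (ac_assoc f a b c) show ?case
    by (simp only: repl_Fn[OF ac_assoc.prems] list.map) (rule aceq.ac_assoc[OF ac_assoc.hyps])
next
  case (ac_pub s t)
  have e: "aceq acs (Pub s) (Pub t)" using aceq.ac_pub[OF ac_pub.hyps] .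
  have "aceq acs (Pub s) P \<longleftrightarrow> aceq acs (Pub t) P"
    using aceq.ac_trans[OF e] aceq.ac_trans[OF aceq.ac_sym[OF e]] by blast
  then show ?case using ac_pub.IH ac_pub.prems by (auto intro: aceq.ac_refl aceq.ac_pub)
next
  case (ac_sign s t u v)
  have e: "aceq acs (Sign s u) (Sign t v)" using aceq.ac_sign[OF ac_sign.hyps] .
  have "aceq acs (Sign s u) P \<longleftrightarrow> aceq acs (Sign t v) P"
    using aceq.ac_trans[OF e] aceq.ac_trans[OF aceq.ac_sym[OF e]] by blast
  then show ?case using ac_sign.IH ac_sign.prems by (auto intro: aceq.ac_refl aceq.ac_sign)
next
  case (ac_blind s t u v)
  have e: "aceq acs (Blind s u) (Blind t v)" using aceq.ac_blind[OF ac_blind.hyps] .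
  have "aceq acs (Blind s u) P \<longleftrightarrow> aceq acs (Blind t v) P"
    using aceq.ac_trans[OF e] aceq.ac_trans[OF aceq.ac_sym[OF e]] by blast
  then show ?case using ac_blind.IH ac_blind.prems by (auto intro: aceq.ac_refl aceq.ac_blind)
next
  case (ac_pair s t u v)
  have e: "aceq acs (Pair s u) (Pair t v)" using aceq.ac_pair[OF ac_pair.hyps] .
  have "aceq acs (Pair s u) P \<longleftrightarrow> aceq acs (Pair t v) P"
    using aceq.ac_trans[OF e] aceq.ac_trans[OF aceq.ac_sym[OF e]] by blast
  then show ?case using ac_pair.IH ac_pair.prems by (auto intro: aceq.ac_refl aceq.ac_pair)
next
  case (ac_enc s t u v)
  have e: "aceq acs (Enc s u) (Enc t v)" using aceq.ac_enc[OF ac_enc.hyps] .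
  have "aceq acs (Enc s u) P \<longleftrightarrow> aceq acs (Enc t v) P"
    using aceq.ac_trans[OF e] aceq.ac_trans[OF aceq.ac_sym[OF e]] by blast
  then show ?case using ac_enc.IH ac_enc.prems by (auto intro: aceq.ac_refl aceq.ac_enc)
next
  case (ac_fn s t g xs ys) show ?case
    by (simp only: repl_Fn[OF ac_fn.prems] list.map map_append) (rule aceq.ac_fn[OF ac_fn.IH[OF ac_fn.prems]])
qed


lemma repl_rstep: "rstep R s t \<Longrightarrow> guarded P \<Longrightarrow> (\<forall>u. subterm u s \<longrightarrow> guarded u \<longrightarrow> normal_mod_ac acs R u)
   \<Longrightarrow> rstep R (repl acs P Q s) (repl acs P Q t)"
proof (induction rule: rstep.induct)
  case (rs_root l r \<sigma>) then show ?case by (simp add: repl_inst rstep.rs_root)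
next
  case (rs_pub s t)
  have "normal_mod_ac acs R (Pub s)" using rs_pub.prems(2)[rule_format, OF st_refl] by simp
  then show ?case using rstep_not_normal[OF rstep.rs_pub[OF rs_pub.hyps]] by blast
next
  case (rs_sign1 s t w)
  have "normal_mod_ac acs R (Sign s w)" using rs_sign1.prems(2)[rule_format, OF st_refl] by simp
  then show ?case using rstep_not_normal[OF rstep.rs_sign1[OF rs_sign1.hyps]] by blast
next
  case (rs_sign2 s t w)
  have "normal_mod_ac acs R (Sign w s)" using rs_sign2.prems(2)[rule_format, OF st_refl] by simp
  then show ?case using rstep_not_normal[OF rstep.rs_sign2[OF rs_sign2.hyps]] by blast
next
  case (rs_blind1 s t w)
  have "normal_mod_ac acs R (Blind s w)" using rs_blind1.prems(2)[rule_format, OF st_refl] by simp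
  then show ?case using rstep_not_normal[OF rstep.rs_blind1[OF rs_blind1.hyps]] by blast
next
  case (rs_blind2 s t w)
  have "normal_mod_ac acs R (Blind w s)" using rs_blind2.prems(2)[rule_format, OF st_refl] by simp
  then show ?case using rstep_not_normal[OF rstep.rs_blind2[OF rs_blind2.hyps]] by blast
next
  case (rs_pair1 s t w)
  have "normal_mod_ac acs R (Pair s w)" using rs_pair1.prems(2)[rule_format, OF st_refl] by simp
  then show ?case using rstep_not_normal[OF rstep.rs_pair1[OF rs_pair1.hyps]] by blast
next
  case (rs_pair2 s t w)
  have "normal_mod_ac acs R (Pair w s)" using rs_pair2.prems(2)[rule_format, OF st_refl] by simp
  then show ?case using rstep_not_normal[OF rstep.rs_pair2[OF rs_pair2.hyps]] by blast
next
  case (rs_enc1 s t w)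
  have "normal_mod_ac acs R (Enc s w)" using rs_enc1.prems(2)[rule_format, OF st_refl] by simp
  then show ?case using rstep_not_normal[OF rstep.rs_enc1[OF rs_enc1.hyps]] by blast
next
  case (rs_enc2 s t w)
  have "normal_mod_ac acs R (Enc w s)" using rs_enc2.prems(2)[rule_format, OF st_refl] by simp
  then show ?case using rstep_not_normal[OF rstep.rs_enc2[OF rs_enc2.hyps]] by blast
next
  case (rs_fn s t g xs ys)
  have sin: "s \<in> set (xs @ s # ys)" by simp
  have "\<forall>u. subterm u s \<longrightarrow> guarded u \<longrightarrow> normal_mod_ac acs R u"
  proof (intro allI impI)
    fix v assume "subterm v s" "guarded v"
    then have "subterm v (Fn g (xs @ s # ys))" using st_fn[OF sin] by blast
    then show "normal_mod_ac acs R v" using rs_fn.prems(2) \<open>guarded v\<close> by blast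
  qed
  then have "rstep R (repl acs P Q s) (repl acs P Q t)" using rs_fn.IH rs_fn.prems(1) by blast
  then show ?case
    by (simp only: repl_Fn[OF rs_fn.prems(1)] list.map map_append) (rule rstep.rs_fn)
qed

lemma repl_rtc:
  assumes RV: "\<forall>(l, r)\<in>R. pvars r \<subseteq> pvars l" and N: "\<forall>v\<in>S. normal_mod_ac acs R v" and gP: "guarded P"
  shows "(rstep_ac acs R)\<^sup>*\<^sup>* s t \<Longrightarrow> Inv acs S s \<Longrightarrow> conv acs R (repl acs P Q s) (repl acs P Q t)"
proof (induction rule: rtranclp_induct)
  case base then show ?case by (simp add: conv_refl)
next
  case (step y z)
  have Iy: "Inv acs S y" using Inv_rtc[OF RV N step(1) step(4)] .
  obtain y' z' where st: "aceq acs y y'" "rstep R y' z'" "aceq acs z' z" using step(2) unfolding rstep_ac_def by blast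
  have Iy': "Inv acs S y'" using Inv_aceq[OF Iy st(1)] .
  have nn: "\<forall>u. subterm u y' \<longrightarrow> guarded u \<longrightarrow> normal_mod_ac acs R u" using Inv_normal[OF Iy' N] by blast
  have r: "rstep R (repl acs P Q y') (repl acs P Q z')" using repl_rstep[OF st(2) gP nn] .
  have c1: "conv acs R (repl acs P Q y) (repl acs P Q y')" using aceq_conv[OF repl_aceq[OF st(1) gP]] .
  have c2: "conv acs R (repl acs P Q z') (repl acs P Q z)" using aceq_conv[OF repl_aceq[OF st(3) gP]] .
  have "conv acs R (repl acs P Q y) (repl acs P Q z)"
    using conv_trans[OF c1 conv_trans[OF rstep_conv[OF r] c2]] .
  then show ?case using conv_trans[OF step(3)[OF step(4)]] by blast
qed

lemma id_ok_replace:
  assumes RV: "\<forall>(l, r)\<in>R. pvars r \<subseteq> pvars l" and CF: "confluent_mod_ac acs R"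
    and G: "\<forall>w\<in>\<Gamma>. okt ar acs R w" and T: "okt ar acs R T" and P: "okt ar acs R P" and gP: "guarded P"
    and id: "id_ok ar acs R (insert P \<Gamma>) T" and Q: "id_ok ar acs R \<Gamma> Q"
    and no: "\<forall>w\<in>insert T \<Gamma>. \<forall>v. subterm v w \<longrightarrow> \<not> aceq acs v P"
  shows "id_ok ar acs R \<Gamma> T"
proof -
  from id obtain C \<sigma> where C: "pat_wf ar C" "\<forall>i\<in>pvars C. \<sigma> i \<in> insert P \<Gamma>" "conv acs R T (inst C \<sigma>)"
    unfolding id_ok_def by blast
  obtain T'' t' where j: "(rstep_ac acs R)\<^sup>*\<^sup>* T T''" "(rstep_ac acs R)\<^sup>*\<^sup>* (inst C \<sigma>) t'" "aceq acs T'' t'"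
    using CF C(3) unfolding confluent_mod_ac_def by blast
  have nT: "normal_mod_ac acs R T" using T by (simp add: okt_def)
  have TT: "T'' = T" using normal_rtc[OF j(1) nT] .
  define S where "S = {v. \<exists>w\<in>insert P \<Gamma>. subterm v w}"
  have NS: "\<forall>v\<in>S. normal_mod_ac acs R v"
  proof
    fix v assume "v \<in> S"
    then obtain w where w: "w \<in> insert P \<Gamma>" "subterm v w" unfolding S_def by blast
    have "okt ar acs R w" using w(1) G P by blast
    then show "normal_mod_ac acs R v" using normal_sub[OF w(2)] by (simp add: okt_def)
  qed
  have I0: "Inv acs S (inst C \<sigma>)" using Inv_inst[OF C(2)] unfolding S_def .
  have c1: "conv acs R (repl acs P Q (inst C \<sigma>)) (repl acs P Q t')"
    using repl_rtc[OF RV NS gP j(2) I0] .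
  have c2: "aceq acs (repl acs P Q T) (repl acs P Q t')" using repl_aceq[OF _ gP] j(3) TT by blast
  have "\<forall>u. subterm u T \<longrightarrow> \<not> aceq acs u P" using no by blast
  then have rT: "repl acs P Q T = T" using repl_id by blast
  have "conv acs R T (repl acs P Q (inst C \<sigma>))"
    using conv_trans[OF aceq_conv[OF c2] conv_sym[OF c1]] rT by simp
  then have cv: "conv acs R T (inst C (\<lambda>i. repl acs P Q (\<sigma> i)))" using repl_inst[OF gP] by simp
  have hs: "\<forall>i\<in>pvars C. repl acs P Q (\<sigma> i) \<in> insert Q \<Gamma>"
  proof
    fix i assume "i \<in> pvars C"
    then have "\<sigma> i = P \<or> \<sigma> i \<in> \<Gamma>" using C(2) by blast
    then show "repl acs P Q (\<sigma> i) \<in> insert Q \<Gamma>"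
    proof
      assume "\<sigma> i = P" then show ?thesis by (simp add: repl_self)
    next
      assume a: "\<sigma> i \<in> \<Gamma>"
      then have "\<forall>u. subterm u (\<sigma> i) \<longrightarrow> \<not> aceq acs u P" using no by blast
      then show ?thesis using repl_id a by (metis insertI2)
    qed
  qed
  define \<sigma>2 where "\<sigma>2 i = repl acs P Q (\<sigma> i)" for i
  have "id_ok ar acs R (insert Q \<Gamma>) T" unfolding id_ok_def using C(1) hs cv \<sigma>2_def[symmetric] by metis
  then show ?thesis using id_ok_comp Q by blast
qed



lemma size_Fn_mem: "M \<in> set Ms \<Longrightarrow> size M < size (Fn g Ms)"
proof (induction Ms)
  case Nil then show ?case by simp
next
  case (Cons a Ms) then show ?case by auto
qed

lemma subterm_size: "subterm u t \<Longrightarrow> u = t \<or> size u < size t"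
proof (induction rule: subterm.induct)
  case (st_fn M Ms s g)
  have "size M < size (Fn g Ms)" using size_Fn_mem[OF st_fn.hyps(1)] .
  then show ?case using st_fn.IH by auto
qed auto

fun args_der :: "('f \<Rightarrow> nat) \<Rightarrow> 'f set \<Rightarrow> ('f pat \<times> 'f pat) set \<Rightarrow> 'f trm set \<Rightarrow> 'f trm \<Rightarrow> bool" where
  "args_der ar acs R \<Gamma> (Pair a b) = (derS ar acs R False \<Gamma> a \<and> derS ar acs R False \<Gamma> b)"
| "args_der ar acs R \<Gamma> (Enc a b) = (derS ar acs R False \<Gamma> a \<and> derS ar acs R False \<Gamma> b)"
| "args_der ar acs R \<Gamma> (Sign a b) = (derS ar acs R False \<Gamma> a \<and> derS ar acs R False \<Gamma> b)"
| "args_der ar acs R \<Gamma> (Blind a b) = (derS ar acs R False \<Gamma> a \<and> derS ar acs R False \<Gamma> b)"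
| "args_der ar acs R \<Gamma> (Nm n) = False"
| "args_der ar acs R \<Gamma> (Vr n) = False"
| "args_der ar acs R \<Gamma> (Pub a) = False"
| "args_der ar acs R \<Gamma> (Fn g ts) = False"

lemma args_der_guarded: "args_der ar acs R \<Gamma> P \<Longrightarrow> guarded P"
  by (cases P) auto

definition Hyps where
  "Hyps ar acs R \<Gamma> P \<longleftrightarrow> derS ar acs R False \<Gamma> P \<and>
     (args_der ar acs R \<Gamma> P \<or> (id_ok ar acs R \<Gamma> P \<and> \<not> guarded P))"

lemma derS_weak2: "derS ar acs R False \<Gamma> X \<Longrightarrow> \<Gamma> \<subseteq> \<Gamma>' \<Longrightarrow> is_seq ar acs R \<Gamma>' Y
  \<Longrightarrow> derS ar acs R False \<Gamma>' X"
proof -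
  assume a: "derS ar acs R False \<Gamma> X" "\<Gamma> \<subseteq> \<Gamma>'" "is_seq ar acs R \<Gamma>' Y"
  have "is_seq ar acs R \<Gamma>' X" using seq_ext[OF a(3), of "{}" X] derS_okt[OF a(1)] by simp
  then show ?thesis using derS_weak[OF a(1,2)] by blast
qed

lemma Hyps_weak:
  assumes "Hyps ar acs R \<Gamma> P" "\<Gamma> \<subseteq> \<Gamma>'" "is_seq ar acs R \<Gamma>' Y"
  shows "Hyps ar acs R \<Gamma>' P"
proof -
  have w: "derS ar acs R False \<Gamma>' X" if "derS ar acs R False \<Gamma> X" for X
    using derS_weak2[OF that assms(2,3)] .
  have ad: "args_der ar acs R \<Gamma>' P" if "args_der ar acs R \<Gamma> P"
    using that w by (cases P) auto
  have "id_ok ar acs R \<Gamma>' P" if "id_ok ar acs R \<Gamma> P" using id_ok_mono[OF that assms(2)] .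
  then show ?thesis using assms(1) w ad unfolding Hyps_def by blast
qed

lemma set_eq1: "insert X G0 = insert P G \<Longrightarrow> G0 \<union> insert X A = insert P (G \<union> A)"
  by (auto simp: set_eq_iff)


lemma cut_two:
  assumes OIH: "\<And>X \<Gamma> T. size X < size Pc \<Longrightarrow> derS ar acs R False \<Gamma> X \<Longrightarrow> derS ar acs R False (insert X \<Gamma>) T
                \<Longrightarrow> is_seq ar acs R \<Gamma> T \<Longrightarrow> derS ar acs R False \<Gamma> T"
    and sz: "size M < size Pc" "size N < size Pc"
    and dM: "derS ar acs R False \<Gamma> M" and dN: "derS ar acs R False \<Gamma> N"
    and d: "derS ar acs R False (\<Gamma> \<union> {M, N}) T" and sq: "is_seq ar acs R \<Gamma> T"
  shows "derS ar acs R False \<Gamma> T"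
proof -
  have sqM: "is_seq ar acs R (\<Gamma> \<union> {M}) T" using seq_ext[OF sq, of "{M}" T] derS_okt[OF dM] seqD(2)[OF sq] by simp
  have dN': "derS ar acs R False (insert M \<Gamma>) N" using derS_weak2[OF dN _ sqM] by auto
  have d': "derS ar acs R False (insert N (insert M \<Gamma>)) T" using d by (simp add: insert_commute)
  have "derS ar acs R False (insert M \<Gamma>) T" using OIH[OF sz(2) dN' d'] sqM by simp
  then show ?thesis using OIH[OF sz(1) dM _ sq] by blast
qed

lemma inner:
  assumes RV: "\<forall>(l, r)\<in>R. pvars r \<subseteq> pvars l" and CF: "confluent_mod_ac acs R"
    and OIH: "\<And>X \<Gamma> T. size X < size Pc \<Longrightarrow> derS ar acs R False \<Gamma> X \<Longrightarrow> derS ar acs R False (insert X \<Gamma>) T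
                \<Longrightarrow> is_seq ar acs R \<Gamma> T \<Longrightarrow> derS ar acs R False \<Gamma> T"
  shows "derS ar acs R c \<Gamma>2 T \<Longrightarrow> c = False \<Longrightarrow> \<Gamma>2 = insert Pc \<Gamma> \<Longrightarrow> Hyps ar acs R \<Gamma> Pc
    \<Longrightarrow> is_seq ar acs R \<Gamma> T \<Longrightarrow> derS ar acs R False \<Gamma> T"
proof (induction arbitrary: \<Gamma> rule: derS.induct)
  case (r_id \<Gamma>2 T c)
  have H: "Hyps ar acs R \<Gamma> Pc" and sq: "is_seq ar acs R \<Gamma> T" using r_id.prems(3,4) .
  have dP: "derS ar acs R False \<Gamma> Pc" and K: "args_der ar acs R \<Gamma> Pc \<or> (id_ok ar acs R \<Gamma> Pc \<and> \<not> guarded Pc)"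
    using H unfolding Hyps_def by auto
  have oP: "okt ar acs R Pc" using derS_okt[OF dP] .
  have G: "\<forall>w\<in>\<Gamma>. okt ar acs R w" using seqD(3)[OF sq] by blast
  have oT: "okt ar acs R T" using seqD(2)[OF sq] .
  have idT: "id_ok ar acs R (insert Pc \<Gamma>) T" using r_id.hyps(2) r_id.prems(2) by simp
  show ?case
  proof (cases "id_ok ar acs R \<Gamma> Pc \<and> \<not> guarded Pc")
    case True
    then have "id_ok ar acs R \<Gamma> T" using id_ok_comp[OF _ idT] by blast
    then show ?thesis using derS.r_id[OF sq] by blast
  next
    case False
    then have gP: "guarded Pc" using K args_der_guarded by blast
    show ?thesis
    proof (cases "\<exists>w\<in>insert T \<Gamma>. \<exists>v. subterm v w \<and> aceq acs v Pc")
      case True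
      then obtain w v where wv: "w \<in> insert T \<Gamma>" "subterm v w" "aceq acs v Pc" by blast
      have gv: "guarded v" using aceq_guarded[OF wv(3)] gP by simp
      have ow: "okt ar acs R w" using wv(1) G oT by blast
      have ov: "okt ar acs R v" using okt_sub[OF ow wv(2)] .
      have sv: "is_seq ar acs R \<Gamma> v" using seq_ext[OF sq, of "{}" v] ov by simp
      have cv0: "\<forall>x\<in>\<Gamma>. \<exists>y\<in>\<Gamma>. aceq acs x y" using ac_refl by blast
      have dv: "derS ar acs R False \<Gamma> v" using derS_ren[OF dP cv0 ac_sym[OF wv(3)] sv] .
      have cv1: "\<forall>x\<in>insert Pc \<Gamma>. \<exists>y\<in>insert v \<Gamma>. aceq acs x y" using ac_refl ac_sym[OF wv(3)] by blast
      have "id_ok ar acs R (insert v \<Gamma>) T" using id_ok_ac[OF idT cv1] .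
      moreover have "is_seq ar acs R (insert v \<Gamma>) T" using seq_ext[OF sq, of "{v}" T] ov oT by simp
      ultimately have dT: "derS ar acs R False (insert v \<Gamma>) T" using derS.r_id by blast
      have ex: "\<exists>B\<in>insert T \<Gamma>. subterm v B" using wv by blast
      show ?thesis using derS.r_gs[OF sq gv ex dv dT] .
    next
      case False
      obtain Q where Q: "id_ok ar acs R \<Gamma> Q" using derS_exQ[OF dP] by blast
      have no: "\<forall>w\<in>insert T \<Gamma>. \<forall>v. subterm v w \<longrightarrow> \<not> aceq acs v Pc" using False by blast
      have "id_ok ar acs R \<Gamma> T" using id_ok_replace[OF RV CF G oT oP gP idT Q no] .
      then show ?thesis using derS.r_id[OF sq] by blast
    qed
  qed
next
  case (r_cut \<Gamma> T M) then show ?case by simp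
next
  case (r_pL M N \<Gamma>0 T c)
  have H: "Hyps ar acs R \<Gamma> Pc" and sq: "is_seq ar acs R \<Gamma> T" using r_pL.prems(3,4) .
  have oP: "okt ar acs R (Pair M N)" using seqD(3)[OF r_pL.hyps(1)] by simp
  have ctx: "\<Gamma>0 \<union> {Pair M N, M, N} = insert Pc (\<Gamma> \<union> {M, N})" using r_pL.prems(2) by (auto simp: set_eq_iff)
  have sq2: "is_seq ar acs R (\<Gamma> \<union> {M, N}) T"
    using seq_ext[OF sq, of "{M, N}" T] okt_args(6,7)[OF oP] seqD(2)[OF sq] by simp
  have IH: "derS ar acs R False (\<Gamma> \<union> {M, N}) T"
    using r_pL.IH[OF r_pL.prems(1) ctx Hyps_weak[OF H _ sq2] sq2] by blast
  show ?case
  proof (cases "Pair M N = Pc")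
    case False
    then have inG: "Pair M N \<in> \<Gamma>" using r_pL.prems(2) by blast
    have sq3: "is_seq ar acs R (insert (Pair M N) \<Gamma>) T" using sq inG by (simp add: insert_absorb)
    have IH': "derS ar acs R False (\<Gamma> \<union> {Pair M N, M, N}) T" using IH inG by (simp add: insert_absorb)
    have "derS ar acs R False (insert (Pair M N) \<Gamma>) T" using derS.r_pL[OF sq3 IH'] .
    then show ?thesis using inG by (simp add: insert_absorb)
  next
    case True
    then have dM: "derS ar acs R False \<Gamma> M" and dN: "derS ar acs R False \<Gamma> N"
      using H unfolding Hyps_def by auto
    have sz: "size M < size Pc" "size N < size Pc" using True by auto
    show ?thesis using cut_two[OF OIH sz dM dN IH sq] .
  qed
next
  case (r_pR \<Gamma>2 M N c)
  have H: "Hyps ar acs R \<Gamma> Pc" and sq: "is_seq ar acs R \<Gamma> (Pair M N)" using r_pR.prems(3,4) .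
  have oT: "okt ar acs R (Pair M N)" using seqD(2)[OF sq] .
  have s1: "is_seq ar acs R \<Gamma> M" using seq_ext[OF sq, of "{}" M] okt_args(6)[OF oT] by simp
  have s2: "is_seq ar acs R \<Gamma> N" using seq_ext[OF sq, of "{}" N] okt_args(7)[OF oT] by simp
  show ?case using derS.r_pR[OF sq r_pR.IH(1)[OF r_pR.prems(1,2) H s1] r_pR.IH(2)[OF r_pR.prems(1,2) H s2]] .
next
  case (r_eL M K \<Gamma>0 N c)
  have H: "Hyps ar acs R \<Gamma> Pc" and sq: "is_seq ar acs R \<Gamma> N" using r_eL.prems(3,4) .
  have oP: "okt ar acs R (Enc M K)" using seqD(3)[OF r_eL.hyps(1)] by simp
  have ctx: "\<Gamma>0 \<union> {Enc M K, M, K} = insert Pc (\<Gamma> \<union> {M, K})" using r_eL.prems(2) by (auto simp: set_eq_iff)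
  have sq2: "is_seq ar acs R (\<Gamma> \<union> {M, K}) N"
    using seq_ext[OF sq, of "{M, K}" N] okt_args(8,9)[OF oP] seqD(2)[OF sq] by simp
  have IH: "derS ar acs R False (\<Gamma> \<union> {M, K}) N"
    using r_eL.IH(2)[OF r_eL.prems(1) ctx Hyps_weak[OF H _ sq2] sq2] by blast
  show ?case
  proof (cases "Enc M K = Pc")
    case False
    then have inG: "Enc M K \<in> \<Gamma>" using r_eL.prems(2) by blast
    have sK: "is_seq ar acs R \<Gamma> K" using seq_ext[OF sq, of "{}" K] okt_args(9)[OF oP] by simp
    have dK: "derS ar acs R False \<Gamma> K" using r_eL.IH(1)[OF r_eL.prems(1,2) H sK] .
    have sq3: "is_seq ar acs R (insert (Enc M K) \<Gamma>) N" using sq inG by (simp add: insert_absorb)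
    have dK': "derS ar acs R False (insert (Enc M K) \<Gamma>) K" using dK inG by (simp add: insert_absorb)
    have IH': "derS ar acs R False (\<Gamma> \<union> {Enc M K, M, K}) N" using IH inG by (simp add: insert_absorb)
    have "derS ar acs R False (insert (Enc M K) \<Gamma>) N" using derS.r_eL[OF sq3 dK' IH'] .
    then show ?thesis using inG by (simp add: insert_absorb)
  next
    case True
    then have dM: "derS ar acs R False \<Gamma> M" and dK: "derS ar acs R False \<Gamma> K"
      using H unfolding Hyps_def by auto
    have sz: "size M < size Pc" "size K < size Pc" using True by auto
    show ?thesis using cut_two[OF OIH sz dM dK IH sq] .
  qed
next
  case (r_eR \<Gamma>2 M K c)
  have H: "Hyps ar acs R \<Gamma> Pc" and sq: "is_seq ar acs R \<Gamma> (Enc M K)" using r_eR.prems(3,4) .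
  have oT: "okt ar acs R (Enc M K)" using seqD(2)[OF sq] .
  have s1: "is_seq ar acs R \<Gamma> M" using seq_ext[OF sq, of "{}" M] okt_args(8)[OF oT] by simp
  have s2: "is_seq ar acs R \<Gamma> K" using seq_ext[OF sq, of "{}" K] okt_args(9)[OF oT] by simp
  show ?case using derS.r_eR[OF sq r_eR.IH(1)[OF r_eR.prems(1,2) H s1] r_eR.IH(2)[OF r_eR.prems(1,2) H s2]] .
next
  case (r_signL K L \<Gamma>0 M N c)
  have H: "Hyps ar acs R \<Gamma> Pc" and sq: "is_seq ar acs R \<Gamma> N" using r_signL.prems(3,4) .
  have oP: "okt ar acs R (Sign M K)" using seqD(3)[OF r_signL.hyps(2)] by simp
  have ctx: "\<Gamma>0 \<union> {Sign M K, Pub L, M} = insert Pc (\<Gamma> \<union> {M})"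
    using r_signL.prems(2) by (auto simp: set_eq_iff)
  have sq2: "is_seq ar acs R (\<Gamma> \<union> {M}) N"
    using seq_ext[OF sq, of "{M}" N] okt_args(2)[OF oP] seqD(2)[OF sq] by simp
  have IH: "derS ar acs R False (\<Gamma> \<union> {M}) N"
    using r_signL.IH[OF r_signL.prems(1) ctx Hyps_weak[OF H _ sq2] sq2] by blast
  have "\<not> guarded Pc \<or> args_der ar acs R \<Gamma> Pc" using H unfolding Hyps_def by blast
  then have "Pub L \<noteq> Pc" by auto
  then have inL: "Pub L \<in> \<Gamma>" using r_signL.prems(2) by blast
  show ?case
  proof (cases "Sign M K = Pc")
    case False
    then have inG: "Sign M K \<in> \<Gamma>" using r_signL.prems(2) by blast
    have eq: "\<Gamma> \<union> {Sign M K, Pub L} = \<Gamma>" using inG inL by blast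
    have sq3: "is_seq ar acs R (\<Gamma> \<union> {Sign M K, Pub L}) N" using sq eq by simp
    have IH': "derS ar acs R False (\<Gamma> \<union> {Sign M K, Pub L, M}) N" using IH inG inL by (simp add: insert_absorb)
    have "derS ar acs R False (\<Gamma> \<union> {Sign M K, Pub L}) N" using derS.r_signL[OF r_signL.hyps(1) sq3 IH'] .
    then show ?thesis using eq by simp
  next
    case True
    then have dM: "derS ar acs R False \<Gamma> M" using H unfolding Hyps_def by auto
    have sz: "size M < size Pc" using True by auto
    show ?thesis using OIH[OF sz dM _ sq] IH by simp
  qed
next
  case (r_signR \<Gamma>2 M K c)
  have H: "Hyps ar acs R \<Gamma> Pc" and sq: "is_seq ar acs R \<Gamma> (Sign M K)" using r_signR.prems(3,4) .
  have oT: "okt ar acs R (Sign M K)" using seqD(2)[OF sq] .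
  have s1: "is_seq ar acs R \<Gamma> M" using seq_ext[OF sq, of "{}" M] okt_args(2)[OF oT] by simp
  have s2: "is_seq ar acs R \<Gamma> K" using seq_ext[OF sq, of "{}" K] okt_args(3)[OF oT] by simp
  show ?case using derS.r_signR[OF sq r_signR.IH(1)[OF r_signR.prems(1,2) H s1] r_signR.IH(2)[OF r_signR.prems(1,2) H s2]] .
next
  case (r_blindL1 M K \<Gamma>0 N c)
  have H: "Hyps ar acs R \<Gamma> Pc" and sq: "is_seq ar acs R \<Gamma> N" using r_blindL1.prems(3,4) .
  have oP: "okt ar acs R (Blind M K)" using seqD(3)[OF r_blindL1.hyps(1)] by simp
  have ctx: "\<Gamma>0 \<union> {Blind M K, M, K} = insert Pc (\<Gamma> \<union> {M, K})" using r_blindL1.prems(2) by (auto simp: set_eq_iff)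
  have sq2: "is_seq ar acs R (\<Gamma> \<union> {M, K}) N"
    using seq_ext[OF sq, of "{M, K}" N] okt_args(4,5)[OF oP] seqD(2)[OF sq] by simp
  have IH: "derS ar acs R False (\<Gamma> \<union> {M, K}) N"
    using r_blindL1.IH(2)[OF r_blindL1.prems(1) ctx Hyps_weak[OF H _ sq2] sq2] by blast
  show ?case
  proof (cases "Blind M K = Pc")
    case False
    then have inG: "Blind M K \<in> \<Gamma>" using r_blindL1.prems(2) by blast
    have sK: "is_seq ar acs R \<Gamma> K" using seq_ext[OF sq, of "{}" K] okt_args(5)[OF oP] by simp
    have dK: "derS ar acs R False \<Gamma> K" using r_blindL1.IH(1)[OF r_blindL1.prems(1,2) H sK] .
    have sq3: "is_seq ar acs R (insert (Blind M K) \<Gamma>) N" using sq inG by (simp add: insert_absorb)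
    have dK': "derS ar acs R False (insert (Blind M K) \<Gamma>) K" using dK inG by (simp add: insert_absorb)
    have IH': "derS ar acs R False (\<Gamma> \<union> {Blind M K, M, K}) N" using IH inG by (simp add: insert_absorb)
    have "derS ar acs R False (insert (Blind M K) \<Gamma>) N" using derS.r_blindL1[OF sq3 dK' IH'] .
    then show ?thesis using inG by (simp add: insert_absorb)
  next
    case True
    then have dM: "derS ar acs R False \<Gamma> M" and dK: "derS ar acs R False \<Gamma> K"
      using H unfolding Hyps_def by auto
    have sz: "size M < size Pc" "size K < size Pc" using True by auto
    show ?thesis using cut_two[OF OIH sz dM dK IH sq] .
  qed
next
  case (r_blindR \<Gamma>2 M K c)
  have H: "Hyps ar acs R \<Gamma> Pc" and sq: "is_seq ar acs R \<Gamma> (Blind M K)" using r_blindR.prems(3,4) .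
  have oT: "okt ar acs R (Blind M K)" using seqD(2)[OF sq] .
  have s1: "is_seq ar acs R \<Gamma> M" using seq_ext[OF sq, of "{}" M] okt_args(4)[OF oT] by simp
  have s2: "is_seq ar acs R \<Gamma> K" using seq_ext[OF sq, of "{}" K] okt_args(5)[OF oT] by simp
  show ?case using derS.r_blindR[OF sq r_blindR.IH(1)[OF r_blindR.prems(1,2) H s1] r_blindR.IH(2)[OF r_blindR.prems(1,2) H s2]] .
next
  case (r_blindL2 M Rr K \<Gamma>0 N c)
  have H: "Hyps ar acs R \<Gamma> Pc" and sq: "is_seq ar acs R \<Gamma> N" using r_blindL2.prems(3,4) .
  have oP: "okt ar acs R (Sign (Blind M Rr) K)" using seqD(3)[OF r_blindL2.hyps(1)] by simp
  have oB: "okt ar acs R (Blind M Rr)" using okt_args(2)[OF oP] .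
  have oRr: "okt ar acs R Rr" using okt_args(5)[OF oB] .
  have oS: "okt ar acs R (Sign M K)" using derS_seq[OF r_blindL2.hyps(3)] by (simp add: is_seq_okt)
  have oM: "okt ar acs R M" using okt_args(2)[OF oS] .
  have ctx: "\<Gamma>0 \<union> {Sign (Blind M Rr) K, Sign M K, Rr} = insert Pc (\<Gamma> \<union> {Sign M K, Rr})"
    using r_blindL2.prems(2) by (auto simp: set_eq_iff)
  have sq2: "is_seq ar acs R (\<Gamma> \<union> {Sign M K, Rr}) N"
    using seq_ext[OF sq, of "{Sign M K, Rr}" N] oS oRr seqD(2)[OF sq] by simp
  have IH: "derS ar acs R False (\<Gamma> \<union> {Sign M K, Rr}) N"
    using r_blindL2.IH(2)[OF r_blindL2.prems(1) ctx Hyps_weak[OF H _ sq2] sq2] by blast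
  have sRr: "is_seq ar acs R \<Gamma> Rr" using seq_ext[OF sq, of "{}" Rr] oRr by simp
  have dRr: "derS ar acs R False \<Gamma> Rr" using r_blindL2.IH(1)[OF r_blindL2.prems(1,2) H sRr] .
  show ?case
  proof (cases "Sign (Blind M Rr) K = Pc")
    case False
    then have inG: "Sign (Blind M Rr) K \<in> \<Gamma>" using r_blindL2.prems(2) by blast
    have sq3: "is_seq ar acs R (insert (Sign (Blind M Rr) K) \<Gamma>) N" using sq inG by (simp add: insert_absorb)
    have dRr': "derS ar acs R False (insert (Sign (Blind M Rr) K) \<Gamma>) Rr" using dRr inG by (simp add: insert_absorb)
    have IH': "derS ar acs R False (\<Gamma> \<union> {Sign (Blind M Rr) K, Sign M K, Rr}) N" using IH inG by (simp add: insert_absorb)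
    have "derS ar acs R False (insert (Sign (Blind M Rr) K) \<Gamma>) N" using derS.r_blindL2[OF sq3 dRr' IH'] .
    then show ?thesis using inG by (simp add: insert_absorb)
  next
    case True
    then have dB: "derS ar acs R False \<Gamma> (Blind M Rr)" and dK: "derS ar acs R False \<Gamma> K"
      using H unfolding Hyps_def by auto
    have szB: "size (Blind M Rr) < size Pc" and szS: "size (Sign M K) < size Pc" and szR: "size Rr < size Pc"
      using True by auto
    have sqB: "is_seq ar acs R (insert (Blind M Rr) \<Gamma>) M" using seq_ext[OF sq, of "{Blind M Rr}" M] oB oM by simp
    have dRr': "derS ar acs R False (insert (Blind M Rr) \<Gamma>) Rr" using derS_weak2[OF dRr _ sqB] by auto
    have sqB2: "is_seq ar acs R (\<Gamma> \<union> {Blind M Rr, M, Rr}) M" using seq_ext[OF sq, of "{Blind M Rr, M, Rr}" M] oB oM oRr by simp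
    have did: "derS ar acs R False (\<Gamma> \<union> {Blind M Rr, M, Rr}) M"
      using derS.r_id[OF sqB2 id_ok_mem] by simp
    have "derS ar acs R False (insert (Blind M Rr) \<Gamma>) M" using derS.r_blindL1[OF sqB dRr' did] .
    moreover have sM: "is_seq ar acs R \<Gamma> M" using seq_ext[OF sq, of "{}" M] oM by simp
    ultimately have dM: "derS ar acs R False \<Gamma> M" using OIH[OF szB dB] by blast
    have sS: "is_seq ar acs R \<Gamma> (Sign M K)" using seq_ext[OF sq, of "{}" "Sign M K"] oS by simp
    have dS: "derS ar acs R False \<Gamma> (Sign M K)" using derS.r_signR[OF sS dM dK] .
    show ?thesis using cut_two[OF OIH szS szR dS dRr IH sq] .
  qed
next
  case (r_gs \<Gamma>2 T A c)
  have H: "Hyps ar acs R \<Gamma> Pc" and sq: "is_seq ar acs R \<Gamma> T" using r_gs.prems(3,4) .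
  have oA: "okt ar acs R A" using derS_okt[OF r_gs.hyps(4)] .
  have oT: "okt ar acs R T" using seqD(2)[OF sq] .
  have G: "\<forall>w\<in>\<Gamma>. okt ar acs R w" using seqD(3)[OF sq] by blast
  have sA: "is_seq ar acs R \<Gamma> A" using seq_ext[OF sq, of "{}" A] oA by simp
  have dA: "derS ar acs R False \<Gamma> A" using r_gs.IH(1)[OF r_gs.prems(1,2) H sA] .
  show ?case
  proof (cases "A = Pc")
    case True
    have "insert A \<Gamma>2 = insert Pc \<Gamma>" using True r_gs.prems(2) by simp
    then show ?thesis using r_gs.IH(2)[OF r_gs.prems(1) _ H sq] by blast
  next
    case False
    have sq2: "is_seq ar acs R (\<Gamma> \<union> {A}) T" using seq_ext[OF sq, of "{A}" T] oA oT by simp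
    have ctx: "insert A \<Gamma>2 = insert Pc (\<Gamma> \<union> {A})" using r_gs.prems(2) by auto
    have dT: "derS ar acs R False (insert A \<Gamma>) T"
      using r_gs.IH(2)[OF r_gs.prems(1) ctx Hyps_weak[OF H Un_upper1 sq2] sq2] by simp
    show ?thesis
    proof (cases "\<exists>B\<in>insert T \<Gamma>. subterm A B")
      case True
      show ?thesis using derS.r_gs[OF sq r_gs.hyps(2) True dA dT] .
    next
      case nsub: False
      have sAP: "subterm A Pc" using r_gs.hyps(3) r_gs.prems(2) nsub by auto
      show ?thesis
      proof (cases "args_der ar acs R \<Gamma> Pc")
        case True
        have "size A < size Pc" using subterm_size[OF sAP] False by blast
        then show ?thesis using OIH[OF _ dA dT sq] by blast
      next
        case ad: False
        then have idP: "id_ok ar acs R \<Gamma> Pc" and dP: "derS ar acs R False \<Gamma> Pc"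
          using H unfolding Hyps_def by auto
        obtain w v where wv: "w \<in> \<Gamma>" "subterm v w" "aceq acs A v"
          using id_ok_guarded_sub[OF RV CF G derS_okt[OF dP] idP sAP r_gs.hyps(2)] by blast
        have gv: "guarded v" using aceq_guarded[OF wv(3)] r_gs.hyps(2) by simp
        have ov: "okt ar acs R v" using okt_sub[OF _ wv(2)] G wv(1) by blast
        have sv: "is_seq ar acs R \<Gamma> v" using seq_ext[OF sq, of "{}" v] ov by simp
        have cv0: "\<forall>x\<in>\<Gamma>. \<exists>y\<in>\<Gamma>. aceq acs x y" using ac_refl by blast
        have dv: "derS ar acs R False \<Gamma> v" using derS_ren[OF dA cv0 wv(3) sv] .
        have sv2: "is_seq ar acs R (insert v \<Gamma>) T" using seq_ext[OF sq, of "{v}" T] ov oT by simp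
        have cv1: "\<forall>x\<in>insert A \<Gamma>. \<exists>y\<in>insert v \<Gamma>. aceq acs x y" using ac_refl wv(3) by blast
        have dT': "derS ar acs R False (insert v \<Gamma>) T" using derS_ren[OF dT cv1 ac_refl sv2] .
        have ex: "\<exists>B\<in>insert T \<Gamma>. subterm v B" using wv by blast
        show ?thesis using derS.r_gs[OF sq gv ex dv dT'] .
      qed
    qed
  qed
qed


lemma cut_adm_n:
  assumes RV: "\<forall>(l, r)\<in>R. pvars r \<subseteq> pvars l" and CF: "confluent_mod_ac acs R"
  shows "\<forall>M \<Gamma> T. size M = n \<longrightarrow> derS ar acs R False \<Gamma> M \<longrightarrow> derS ar acs R False (insert M \<Gamma>) T
           \<longrightarrow> is_seq ar acs R \<Gamma> T \<longrightarrow> derS ar acs R False \<Gamma> T"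
proof (induction n rule: less_induct)
  case (less n)
  have OIH: "\<And>X \<Gamma> T. size X < n \<Longrightarrow> derS ar acs R False \<Gamma> X \<Longrightarrow> derS ar acs R False (insert X \<Gamma>) T
                \<Longrightarrow> is_seq ar acs R \<Gamma> T \<Longrightarrow> derS ar acs R False \<Gamma> T"
    using less.IH by blast
  have main: "derS ar acs R c \<Gamma> M \<Longrightarrow> c = False \<Longrightarrow> size M = n \<Longrightarrow>
     \<forall>T. derS ar acs R False (insert M \<Gamma>) T \<longrightarrow> is_seq ar acs R \<Gamma> T \<longrightarrow> derS ar acs R False \<Gamma> T" for c \<Gamma> M
  proof (induction rule: derS.induct)
    case (r_id \<Gamma> M c)
    have dM: "derS ar acs R False \<Gamma> M" using derS.r_id[OF r_id.hyps] .
    have oM: "okt ar acs R M" using seqD(2)[OF r_id.hyps(1)] .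
    have G: "\<forall>w\<in>\<Gamma>. okt ar acs R w" using seqD(3)[OF r_id.hyps(1)] by blast
    show ?case
    proof (intro allI impI)
      fix T assume d2: "derS ar acs R False (insert M \<Gamma>) T" and sq: "is_seq ar acs R \<Gamma> T"
      have oT: "okt ar acs R T" using seqD(2)[OF sq] .
      show "derS ar acs R False \<Gamma> T"
      proof (cases "guarded M")
        case True
        obtain w v where wv: "w \<in> \<Gamma>" "subterm v w" "aceq acs M v"
          using id_ok_guarded_sub[OF RV CF G oM r_id.hyps(2) st_refl True] by blast
        have gv: "guarded v" using aceq_guarded[OF wv(3)] True by simp
        have ov: "okt ar acs R v" using okt_sub[OF _ wv(2)] G wv(1) by blast
        have sv: "is_seq ar acs R \<Gamma> v" using seq_ext[OF sq, of "{}" v] ov by simp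
        have "id_ok ar acs R \<Gamma> v" using id_ok_conv[OF aceq_conv[OF ac_sym[OF wv(3)]] r_id.hyps(2)] .
        then have dv: "derS ar acs R False \<Gamma> v" using derS.r_id[OF sv] by blast
        have sv2: "is_seq ar acs R (insert v \<Gamma>) T" using seq_ext[OF sq, of "{v}" T] ov oT by simp
        have cv1: "\<forall>x\<in>insert M \<Gamma>. \<exists>y\<in>insert v \<Gamma>. aceq acs x y" using ac_refl wv(3) by blast
        have dT': "derS ar acs R False (insert v \<Gamma>) T" using derS_ren[OF d2 cv1 ac_refl sv2] .
        have ex: "\<exists>B\<in>insert T \<Gamma>. subterm v B" using wv by blast
        show ?thesis using derS.r_gs[OF sq gv ex dv dT'] .
      next
        case False
        have H: "Hyps ar acs R \<Gamma> M" unfolding Hyps_def using dM r_id.hyps(2) False by blast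
        have OIH': "\<And>X \<Gamma> T. size X < size M \<Longrightarrow> derS ar acs R False \<Gamma> X \<Longrightarrow> derS ar acs R False (insert X \<Gamma>) T
                \<Longrightarrow> is_seq ar acs R \<Gamma> T \<Longrightarrow> derS ar acs R False \<Gamma> T" using OIH r_id.prems(2) by blast
        show ?thesis using inner[OF RV CF OIH' d2 refl refl H sq] .
      qed
    qed
  next
    case (r_cut \<Gamma> T M) then show ?case by simp
  next
    case (r_pL A B \<Gamma>0 M c)
    have oM: "okt ar acs R M" using seqD(2)[OF r_pL.hyps(1)] .
    have oP: "okt ar acs R (Pair A B)" using seqD(3)[OF r_pL.hyps(1)] by simp
    show ?case
    proof (intro allI impI)
      fix T assume d2: "derS ar acs R False (insert M (insert (Pair A B) \<Gamma>0)) T"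
        and sq: "is_seq ar acs R (insert (Pair A B) \<Gamma>0) T"
      have sq2: "is_seq ar acs R (\<Gamma>0 \<union> {Pair A B, A, B}) T"
        using seq_ext[OF sq, of "{A, B}" T] okt_args(6,7)[OF oP] seqD(2)[OF sq] by (simp add: insert_commute)
      have sq3: "is_seq ar acs R (insert M (\<Gamma>0 \<union> {Pair A B, A, B})) T"
        using seq_ext[OF sq2, of "{M}" T] oM seqD(2)[OF sq] by (simp add: insert_commute)
      have d2': "derS ar acs R False (insert M (\<Gamma>0 \<union> {Pair A B, A, B})) T"
        using derS_weak2[OF d2 _ sq3] by auto
      have "derS ar acs R False (\<Gamma>0 \<union> {Pair A B, A, B}) T"
        using r_pL.IH[OF r_pL.prems] d2' sq2 by blast
      then show "derS ar acs R False (insert (Pair A B) \<Gamma>0) T" using derS.r_pL[OF sq] by blast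
    qed
  next
    case (r_pR \<Gamma> A B c)
    have dP: "derS ar acs R False \<Gamma> (Pair A B)" using derS.r_pR[OF r_pR.hyps(1)] r_pR.hyps(2,3) r_pR.prems(1) by simp
    have H: "Hyps ar acs R \<Gamma> (Pair A B)" unfolding Hyps_def using dP r_pR.hyps(2,3) r_pR.prems(1) by simp
    have OIH': "\<And>X \<Gamma> T. size X < size (Pair A B) \<Longrightarrow> derS ar acs R False \<Gamma> X \<Longrightarrow> derS ar acs R False (insert X \<Gamma>) T
                \<Longrightarrow> is_seq ar acs R \<Gamma> T \<Longrightarrow> derS ar acs R False \<Gamma> T" using OIH r_pR.prems(2) by blast
    show ?case
    proof (intro allI impI)
      fix T assume d2: "derS ar acs R False (insert (Pair A B) \<Gamma>) T" and sq: "is_seq ar acs R \<Gamma> T"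
      show "derS ar acs R False \<Gamma> T" using inner[OF RV CF OIH' d2 refl refl H sq] .
    qed
  next
    case (r_eL A K \<Gamma>0 M c)
    have oM: "okt ar acs R M" using seqD(2)[OF r_eL.hyps(1)] .
    have oP: "okt ar acs R (Enc A K)" using seqD(3)[OF r_eL.hyps(1)] by simp
    show ?case
    proof (intro allI impI)
      fix T assume d2: "derS ar acs R False (insert M (insert (Enc A K) \<Gamma>0)) T"
        and sq: "is_seq ar acs R (insert (Enc A K) \<Gamma>0) T"
      have sq2: "is_seq ar acs R (\<Gamma>0 \<union> {Enc A K, A, K}) T"
        using seq_ext[OF sq, of "{A, K}" T] okt_args(8,9)[OF oP] seqD(2)[OF sq] by (simp add: insert_commute)
      have sq3: "is_seq ar acs R (insert M (\<Gamma>0 \<union> {Enc A K, A, K})) T"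
        using seq_ext[OF sq2, of "{M}" T] oM seqD(2)[OF sq] by (simp add: insert_commute)
      have d2': "derS ar acs R False (insert M (\<Gamma>0 \<union> {Enc A K, A, K})) T"
        using derS_weak2[OF d2 _ sq3] by auto
      have "derS ar acs R False (\<Gamma>0 \<union> {Enc A K, A, K}) T"
        using r_eL.IH(2)[OF r_eL.prems] d2' sq2 by blast
      moreover have "derS ar acs R False (insert (Enc A K) \<Gamma>0) K" using r_eL.hyps(2) r_eL.prems(1) by simp
      ultimately show "derS ar acs R False (insert (Enc A K) \<Gamma>0) T" using derS.r_eL[OF sq] by blast
    qed
  next
    case (r_eR \<Gamma> A B c)
    have dP: "derS ar acs R False \<Gamma> (Enc A B)" using derS.r_eR[OF r_eR.hyps(1)] r_eR.hyps(2,3) r_eR.prems(1) by simp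
    have H: "Hyps ar acs R \<Gamma> (Enc A B)" unfolding Hyps_def using dP r_eR.hyps(2,3) r_eR.prems(1) by simp
    have OIH': "\<And>X \<Gamma> T. size X < size (Enc A B) \<Longrightarrow> derS ar acs R False \<Gamma> X \<Longrightarrow> derS ar acs R False (insert X \<Gamma>) T
                \<Longrightarrow> is_seq ar acs R \<Gamma> T \<Longrightarrow> derS ar acs R False \<Gamma> T" using OIH r_eR.prems(2) by blast
    show ?case
    proof (intro allI impI)
      fix T assume d2: "derS ar acs R False (insert (Enc A B) \<Gamma>) T" and sq: "is_seq ar acs R \<Gamma> T"
      show "derS ar acs R False \<Gamma> T" using inner[OF RV CF OIH' d2 refl refl H sq] .
    qed
  next
    case (r_signL K L \<Gamma>0 A M c)
    have oM: "okt ar acs R M" using seqD(2)[OF r_signL.hyps(2)] .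
    have oP: "okt ar acs R (Sign A K)" using seqD(3)[OF r_signL.hyps(2)] by simp
    show ?case
    proof (intro allI impI)
      fix T assume d2: "derS ar acs R False (insert M (\<Gamma>0 \<union> {Sign A K, Pub L})) T"
        and sq: "is_seq ar acs R (\<Gamma>0 \<union> {Sign A K, Pub L}) T"
      have sq2: "is_seq ar acs R (\<Gamma>0 \<union> {Sign A K, Pub L, A}) T"
        using seq_ext[OF sq, of "{A}" T] okt_args(2)[OF oP] seqD(2)[OF sq] by (simp add: insert_commute)
      have sq3: "is_seq ar acs R (insert M (\<Gamma>0 \<union> {Sign A K, Pub L, A})) T"
        using seq_ext[OF sq2, of "{M}" T] oM seqD(2)[OF sq] by (simp add: insert_commute)
      have d2': "derS ar acs R False (insert M (\<Gamma>0 \<union> {Sign A K, Pub L, A})) T"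
        using derS_weak2[OF d2 _ sq3] by auto
      have "derS ar acs R False (\<Gamma>0 \<union> {Sign A K, Pub L, A}) T"
        using r_signL.IH[OF r_signL.prems] d2' sq2 by blast
      then show "derS ar acs R False (\<Gamma>0 \<union> {Sign A K, Pub L}) T" using derS.r_signL[OF r_signL.hyps(1) sq] by blast
    qed
  next
    case (r_signR \<Gamma> A B c)
    have dP: "derS ar acs R False \<Gamma> (Sign A B)" using derS.r_signR[OF r_signR.hyps(1)] r_signR.hyps(2,3) r_signR.prems(1) by simp
    have H: "Hyps ar acs R \<Gamma> (Sign A B)" unfolding Hyps_def using dP r_signR.hyps(2,3) r_signR.prems(1) by simp
    have OIH': "\<And>X \<Gamma> T. size X < size (Sign A B) \<Longrightarrow> derS ar acs R False \<Gamma> X \<Longrightarrow> derS ar acs R False (insert X \<Gamma>) T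
                \<Longrightarrow> is_seq ar acs R \<Gamma> T \<Longrightarrow> derS ar acs R False \<Gamma> T" using OIH r_signR.prems(2) by blast
    show ?case
    proof (intro allI impI)
      fix T assume d2: "derS ar acs R False (insert (Sign A B) \<Gamma>) T" and sq: "is_seq ar acs R \<Gamma> T"
      show "derS ar acs R False \<Gamma> T" using inner[OF RV CF OIH' d2 refl refl H sq] .
    qed
  next
    case (r_blindL1 A K \<Gamma>0 M c)
    have oM: "okt ar acs R M" using seqD(2)[OF r_blindL1.hyps(1)] .
    have oP: "okt ar acs R (Blind A K)" using seqD(3)[OF r_blindL1.hyps(1)] by simp
    show ?case
    proof (intro allI impI)
      fix T assume d2: "derS ar acs R False (insert M (insert (Blind A K) \<Gamma>0)) T"
        and sq: "is_seq ar acs R (insert (Blind A K) \<Gamma>0) T"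
      have sq2: "is_seq ar acs R (\<Gamma>0 \<union> {Blind A K, A, K}) T"
        using seq_ext[OF sq, of "{A, K}" T] okt_args(4,5)[OF oP] seqD(2)[OF sq] by (simp add: insert_commute)
      have sq3: "is_seq ar acs R (insert M (\<Gamma>0 \<union> {Blind A K, A, K})) T"
        using seq_ext[OF sq2, of "{M}" T] oM seqD(2)[OF sq] by (simp add: insert_commute)
      have d2': "derS ar acs R False (insert M (\<Gamma>0 \<union> {Blind A K, A, K})) T"
        using derS_weak2[OF d2 _ sq3] by auto
      have "derS ar acs R False (\<Gamma>0 \<union> {Blind A K, A, K}) T"
        using r_blindL1.IH(2)[OF r_blindL1.prems] d2' sq2 by blast
      moreover have "derS ar acs R False (insert (Blind A K) \<Gamma>0) K" using r_blindL1.hyps(2) r_blindL1.prems(1) by simp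
      ultimately show "derS ar acs R False (insert (Blind A K) \<Gamma>0) T" using derS.r_blindL1[OF sq] by blast
    qed
  next
    case (r_blindR \<Gamma> A B c)
    have dP: "derS ar acs R False \<Gamma> (Blind A B)" using derS.r_blindR[OF r_blindR.hyps(1)] r_blindR.hyps(2,3) r_blindR.prems(1) by simp
    have H: "Hyps ar acs R \<Gamma> (Blind A B)" unfolding Hyps_def using dP r_blindR.hyps(2,3) r_blindR.prems(1) by simp
    have OIH': "\<And>X \<Gamma> T. size X < size (Blind A B) \<Longrightarrow> derS ar acs R False \<Gamma> X \<Longrightarrow> derS ar acs R False (insert X \<Gamma>) T
                \<Longrightarrow> is_seq ar acs R \<Gamma> T \<Longrightarrow> derS ar acs R False \<Gamma> T" using OIH r_blindR.prems(2) by blast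
    show ?case
    proof (intro allI impI)
      fix T assume d2: "derS ar acs R False (insert (Blind A B) \<Gamma>) T" and sq: "is_seq ar acs R \<Gamma> T"
      show "derS ar acs R False \<Gamma> T" using inner[OF RV CF OIH' d2 refl refl H sq] .
    qed
  next
    case (r_blindL2 A Rr K \<Gamma>0 M c)
    have oM: "okt ar acs R M" using seqD(2)[OF r_blindL2.hyps(1)] .
    have oP: "okt ar acs R (Sign (Blind A Rr) K)" using seqD(3)[OF r_blindL2.hyps(1)] by simp
    have oRr: "okt ar acs R Rr" using okt_args(5)[OF okt_args(2)[OF oP]] .
    have oS: "okt ar acs R (Sign A K)" using derS_seq[OF r_blindL2.hyps(3)] by (simp add: is_seq_okt)
    show ?case
    proof (intro allI impI)
      fix T assume d2: "derS ar acs R False (insert M (insert (Sign (Blind A Rr) K) \<Gamma>0)) T"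
        and sq: "is_seq ar acs R (insert (Sign (Blind A Rr) K) \<Gamma>0) T"
      have sq2: "is_seq ar acs R (\<Gamma>0 \<union> {Sign (Blind A Rr) K, Sign A K, Rr}) T"
        using seq_ext[OF sq, of "{Sign A K, Rr}" T] oS oRr seqD(2)[OF sq] by (simp add: insert_commute)
      have sq3: "is_seq ar acs R (insert M (\<Gamma>0 \<union> {Sign (Blind A Rr) K, Sign A K, Rr})) T"
        using seq_ext[OF sq2, of "{M}" T] oM seqD(2)[OF sq] by (simp add: insert_commute)
      have d2': "derS ar acs R False (insert M (\<Gamma>0 \<union> {Sign (Blind A Rr) K, Sign A K, Rr})) T"
        using derS_weak2[OF d2 _ sq3] by auto
      have "derS ar acs R False (\<Gamma>0 \<union> {Sign (Blind A Rr) K, Sign A K, Rr}) T"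
        using r_blindL2.IH(2)[OF r_blindL2.prems] d2' sq2 by blast
      moreover have "derS ar acs R False (insert (Sign (Blind A Rr) K) \<Gamma>0) Rr" using r_blindL2.hyps(2) r_blindL2.prems(1) by simp
      ultimately show "derS ar acs R False (insert (Sign (Blind A Rr) K) \<Gamma>0) T" using derS.r_blindL2[OF sq] by blast
    qed
  next
    case (r_gs \<Gamma> M A c)
    have oM: "okt ar acs R M" using seqD(2)[OF r_gs.hyps(1)] .
    have oA: "okt ar acs R A" using derS_okt[OF r_gs.hyps(4)] .
    have dA: "derS ar acs R False \<Gamma> A" using r_gs.hyps(4) r_gs.prems(1) by simp
    show ?case
    proof (intro allI impI)
      fix T assume d2: "derS ar acs R False (insert M \<Gamma>) T" and sq: "is_seq ar acs R \<Gamma> T"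
      have oT: "okt ar acs R T" using seqD(2)[OF sq] .
      have sq2: "is_seq ar acs R (\<Gamma> \<union> {A}) T" using seq_ext[OF sq, of "{A}" T] oA oT by simp
      have sq3: "is_seq ar acs R (\<Gamma> \<union> {A, M}) T" using seq_ext[OF sq, of "{A, M}" T] oA oM oT by simp
      have d2': "derS ar acs R False (insert M (insert A \<Gamma>)) T"
        using derS_weak2[OF d2 _ sq3] by (auto simp: insert_commute)
      have dT: "derS ar acs R False (insert A \<Gamma>) T"
        using r_gs.IH(2)[OF r_gs.prems] d2' sq2 by simp
      show "derS ar acs R False \<Gamma> T"
      proof (cases "\<exists>B\<in>insert T \<Gamma>. subterm A B")
        case True
        show ?thesis using derS.r_gs[OF sq r_gs.hyps(2) True dA dT] .
      next
        case False
        then have sAM: "subterm A M" using r_gs.hyps(3) by auto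
        show ?thesis
        proof (cases "A = M")
          case True
          then show ?thesis using r_gs.IH(1)[OF r_gs.prems(1)] r_gs.prems(2) dT sq by blast
        next
          case False
          have "size A < n" using subterm_size[OF sAM] False r_gs.prems(2) by auto
          then show ?thesis using OIH[OF _ dA dT sq] by blast
        qed
      qed
    qed
  qed
  show ?case using main by blast
qed

lemma cut_adm:
  assumes RV: "\<forall>(l, r)\<in>R. pvars r \<subseteq> pvars l" and CF: "confluent_mod_ac acs R"
    and "derS ar acs R False \<Gamma> M" "derS ar acs R False (insert M \<Gamma>) T" "is_seq ar acs R \<Gamma> T"
  shows "derS ar acs R False \<Gamma> T"
  using cut_adm_n[OF RV CF, of "size M"] assms(3-5) by blast


lemma elim_cut:
  assumes RV: "\<forall>(l, r)\<in>R. pvars r \<subseteq> pvars l" and CF: "confluent_mod_ac acs R"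
  shows "derS ar acs R c \<Gamma> M \<Longrightarrow> derS ar acs R False \<Gamma> M"
proof (induction rule: derS.induct)
  case (r_id \<Gamma> M c) then show ?case by (rule derS.r_id)
next
  case (r_cut \<Gamma> T M) then show ?case using cut_adm[OF RV CF] by blast
next
  case (r_pL M N \<Gamma> T c) then show ?case using derS.r_pL by blast
next
  case (r_pR \<Gamma> M N c) then show ?case using derS.r_pR by blast
next
  case (r_eL M K \<Gamma> N c) then show ?case using derS.r_eL by blast
next
  case (r_eR \<Gamma> M K c) then show ?case using derS.r_eR by blast
next
  case (r_signL K L \<Gamma> M N c) then show ?case using derS.r_signL by blast
next
  case (r_signR \<Gamma> M K c) then show ?case using derS.r_signR by blast
next
  case (r_blindL1 M K \<Gamma> N c) then show ?case using derS.r_blindL1 by blast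
next
  case (r_blindR \<Gamma> M K c) then show ?case using derS.r_blindR by blast
next
  case (r_blindL2 M Rr K \<Gamma> N c) then show ?case using derS.r_blindL2 by blast
next
  case (r_gs \<Gamma> M A c) then show ?case using derS.r_gs by blast
qed

theorem theorem1:
  fixes ar :: "'f \<Rightarrow> nat" and th :: "'f \<Rightarrow> nat" and acs :: "'f set"
    and R :: "('f pat \<times> 'f pat) set" and \<Gamma> :: "'f trm set" and M :: "'f trm"
  assumes "E_setting ar th acs R"
    and "derS ar acs R True \<Gamma> M"
  shows "derS ar acs R False \<Gamma> M"
proof -
  have RV: "\<forall>(l, r)\<in>R. pvars r \<subseteq> pvars l" using assms(1) unfolding E_setting_def by fast
  have CF: "confluent_mod_ac acs R" using assms(1) unfolding E_setting_def by blast
  show ?thesis using elim_cut[OF RV CF assms(2)] .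
qed


end
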